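(* Let $\Omega\subseteq\mathbb{R}^{d+1}$ be an $L_0$-Lipschitz graph domain. There exists $\delta_0=\delta_0(L_0,d)>0$ such that if $0<\delta<\delta_0$ and $\varphi:\overline{\Omega}\to\varphi(\overline{\Omega})$ is a $(1+\delta)$-bi-Lipschitz $C^1$ map satisfying $|D\varphi(z)-I|\le\delta$ for all $z\in\overline{\Omega}$, then there exists $L_1$ depending only on $L_0$ and $d$ such that $\varphi(\Omega)$ is an $L_1$-Lipschitz graph domain.
   Context: An open connected set $\Omega'\subseteq\mathbb{R}^{d+1}$ is an $M$-Lipschitz graph domain if there is a composition $A$ of a translation, a dilation and a rotation and a function $r:\mathbb{S}^d\to(0,\infty)$ such that $\partial A(\Omega')=\{r(\theta)\theta:\theta\in\mathbb{S}^d\}$, $|r(\theta)-r(\psi)|\le M|\theta-\psi|$ for all $\theta,\psi\in\mathbb{S}^d$, and $\frac{1}{1+M}\le r(\theta)\le1$. $|\cdot|$ on matrices is the operator norm; $I$ is the identity. *)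

theory Defs
  imports "HOL-Analysis.Analysis"
begin

definition rotation :: "(real^'n \<Rightarrow> real^'n) \<Rightarrow> bool" where
  "rotation R \<longleftrightarrow> orthogonal_transformation R \<and> det (matrix R) = 1"

definition transl_dil_rot :: "(real^'n \<Rightarrow> real^'n) \<Rightarrow> bool" where
  "transl_dil_rot A \<longleftrightarrow>
     (\<exists>b c R. c > 0 \<and> rotation R \<and> A = (\<lambda>x. x + b) \<circ> (\<lambda>x. c *\<^sub>R x) \<circ> R)"

text \<open>M-Lipschitz graph domain; the unit sphere S^d is sphere 0 1 in real^'n, CARD('n) = d+1.\<close>
definition lipschitz_graph_domain :: "real \<Rightarrow> (real^'n) set \<Rightarrow> bool" where
  "lipschitz_graph_domain M \<Omega> \<longleftrightarrow> open \<Omega> \<and> connected \<Omega> \<and>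
     (\<exists>A r. transl_dil_rot A \<and>
        (\<forall>\<theta>\<in>sphere 0 1. r \<theta> > 0) \<and>
        frontier (A ` \<Omega>) = (\<lambda>\<theta>. r \<theta> *\<^sub>R \<theta>) ` sphere 0 1 \<and>
        (\<forall>\<theta>\<in>sphere 0 1. \<forall>\<psi>\<in>sphere 0 1. \<bar>r \<theta> - r \<psi>\<bar> \<le> M * norm (\<theta> - \<psi>)) \<and>
        (\<forall>\<theta>\<in>sphere 0 1. 1 / (1 + M) \<le> r \<theta> \<and> r \<theta> \<le> 1))"

definition bi_lipschitz_on :: "real \<Rightarrow> 'a::metric_space set \<Rightarrow> ('a \<Rightarrow> 'b::metric_space) \<Rightarrow> bool" where
  "bi_lipschitz_on K S f \<longleftrightarrow>
     (\<forall>x\<in>S. \<forall>y\<in>S. dist x y / K \<le> dist (f x) (f y) \<and> dist (f x) (f y) \<le> K * dist x y)"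

end

theory Submission
  imports Defs "HOL-Analysis.Analysis"
begin

lemma sgn_diff_bound:
  fixes p x :: "'a::real_normed_vector"
  assumes "x \<noteq> 0"
  shows "norm (sgn p - sgn x) \<le> 2 * norm (p - x) / norm x"
proof (cases "p = 0")
  case True
  then show ?thesis using assms by (simp add: norm_sgn)
next
  case False
  have "sgn p - sgn x = (p - x) /\<^sub>R norm x + (inverse (norm p) - inverse (norm x)) *\<^sub>R p"
    using False assms by (simp add: sgn_div_norm algebra_simps)
  then have "norm (sgn p - sgn x) \<le> norm ((p - x) /\<^sub>R norm x) + norm ((inverse (norm p) - inverse (norm x)) *\<^sub>R p)"
    by (metis norm_triangle_ineq)
  also have "norm ((p - x) /\<^sub>R norm x) = norm (p - x) / norm x" unfolding norm_scaleR by (simp add: field_simps)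
  also have "norm ((inverse (norm p) - inverse (norm x)) *\<^sub>R p) = \<bar>norm x - norm p\<bar> / norm x"
    using False assms by (simp add: field_simps abs_mult abs_div)
  also have "\<bar>norm x - norm p\<bar> \<le> norm (p - x)"
    by (metis norm_minus_commute norm_triangle_ineq3)
  finally show ?thesis using assms by (simp add: divide_right_mono add_divide_distrib[symmetric])
qed

locale stardata =
  fixes r :: "'a::euclidean_space \<Rightarrow> real" and L :: real
  assumes L0: "L \<ge> 0"
    and rb: "\<And>\<theta>. \<theta> \<in> sphere 0 1 \<Longrightarrow> 1/(1+L) \<le> r \<theta> \<and> r \<theta> \<le> 1"
    and rlip: "\<And>\<theta> \<psi>. \<theta> \<in> sphere 0 1 \<Longrightarrow> \<psi> \<in> sphere 0 1 \<Longrightarrow> \<bar>r \<theta> - r \<psi>\<bar> \<le> L * norm (\<theta> - \<psi>)"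
begin

definition "\<rho> = 1/(1+L)"
definition "\<Gamma> = (\<lambda>\<theta>. r \<theta> *\<^sub>R \<theta>) ` sphere 0 1"
definition "Iset = {p. p = 0 \<or> norm p < r (sgn p)}"
definition "Oset = {p. p \<noteq> 0 \<and> norm p > r (sgn p)}"
definition "Kin = {p. p = 0 \<or> norm p \<le> r (sgn p)}"
definition "Kout = {p. p \<noteq> 0 \<and> norm p \<ge> r (sgn p)}"

lemma rho_pos: "\<rho> > 0" and rho_le1: "\<rho> \<le> 1"
  using L0 by (auto simp: \<rho>_def)

lemma sgn_sphere: "(p::'a) \<noteq> 0 \<Longrightarrow> sgn p \<in> sphere 0 1"
  by (simp add: norm_sgn dist_0_norm)

lemma r_lo: "p \<noteq> 0 \<Longrightarrow> \<rho> \<le> r (sgn p)" and r_hi: "p \<noteq> 0 \<Longrightarrow> r (sgn p) \<le> 1"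
  using rb[OF sgn_sphere] by (auto simp: \<rho>_def)

lemma r_pos: "\<theta> \<in> sphere 0 1 \<Longrightarrow> r \<theta> > 0"
proof -
  assume th: "\<theta> \<in> sphere 0 1"
  have "0 < 1/(1+L)" using L0 by simp
  then show ?thesis using rb[OF th] by linarith
qed

lemma Gamma_iff: "p \<in> \<Gamma> \<longleftrightarrow> p \<noteq> 0 \<and> norm p = r (sgn p)"
proof
  assume "p \<in> \<Gamma>"
  then obtain \<theta> where th: "\<theta> \<in> sphere 0 1" "p = r \<theta> *\<^sub>R \<theta>" by (auto simp: \<Gamma>_def)
  have rp: "r \<theta> > 0" using r_pos[OF th(1)] .
  have "sgn p = \<theta>" using th rp by (simp add: sgn_scaleR sgn_div_norm)
  then show "p \<noteq> 0 \<and> norm p = r (sgn p)" using th rp by auto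
next
  assume "p \<noteq> 0 \<and> norm p = r (sgn p)"
  then have "p = r (sgn p) *\<^sub>R sgn p" "sgn p \<in> sphere 0 1"
    by (auto simp: sgn_div_norm norm_sgn)
  then show "p \<in> \<Gamma>" unfolding \<Gamma>_def by blast
qed

lemma r_cont: "continuous_on (sphere 0 1) r"
proof -
  have "L-lipschitz_on (sphere 0 1) r"
    using rlip L0 by (auto simp: lipschitz_on_def dist_real_def dist_norm)
  then show ?thesis by (rule lipschitz_on_continuous_on)
qed

lemma rsgn_cont: "continuous_on (- {0}) (\<lambda>p. r (sgn p))"
proof -
  have s: "sgn ` (-{0::'a}) \<subseteq> sphere 0 1" using sgn_sphere by blast
  have c: "continuous_on (-{0::'a}) sgn" by (rule continuous_on_sgn[OF continuous_on_id]) simp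
  show ?thesis by (rule continuous_on_compose2[OF r_cont c s])
qed

lemma Gamma_bounded: "p \<in> \<Gamma> \<Longrightarrow> \<rho> \<le> norm p \<and> norm p \<le> 1"
  using Gamma_iff r_lo r_hi by auto

lemma open_Oset: "open Oset"
proof -
  have "Oset = (- {0}) \<inter> (\<lambda>p. norm p - r (sgn p)) -` {0<..}"
    by (auto simp: Oset_def)
  also have "open \<dots>"
    by (rule continuous_open_preimage) (auto intro!: continuous_intros rsgn_cont)
  finally show ?thesis .
qed

lemma open_Iset: "open Iset"
proof -
  have "Iset = ball 0 \<rho> \<union> ((- {0}) \<inter> (\<lambda>p. r (sgn p) - norm p) -` {0<..})"
  proof (intro set_eqI iffI)
    fix p assume "p \<in> Iset"
    then show "p \<in> ball 0 \<rho> \<union> ((- {0}) \<inter> (\<lambda>p. r (sgn p) - norm p) -` {0<..})"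
      using rho_pos by (cases "p = 0") (auto simp: Iset_def)
  next
    fix p assume p: "p \<in> ball 0 \<rho> \<union> ((- {0}) \<inter> (\<lambda>p. r (sgn p) - norm p) -` {0<..})"
    show "p \<in> Iset"
    proof (cases "p = 0")
      case False
      then have "\<rho> \<le> r (sgn p)" by (rule r_lo)
      then show ?thesis using p by (auto simp: Iset_def)
    qed (simp add: Iset_def)
  qed
  also have "open \<dots>"
    by (intro open_Un open_ball continuous_open_preimage) (auto intro!: continuous_intros rsgn_cont)
  finally show ?thesis .
qed

lemma partition: "Iset \<inter> Oset = {}" "Iset \<union> Oset \<union> \<Gamma> = UNIV"
  by (auto simp: Iset_def Oset_def Gamma_iff)

lemma Iset_scale: "p \<in> Iset \<Longrightarrow> 0 \<le> s \<Longrightarrow> s \<le> 1 \<Longrightarrow> s *\<^sub>R p \<in> Iset"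
proof -
  assume "p \<in> Iset" "0 \<le> s" "s \<le> 1"
  moreover have "s * norm p \<le> norm p" using \<open>0 \<le> s\<close> \<open>s \<le> 1\<close> by (simp add: mult_left_le_one_le)
  ultimately show ?thesis by (cases "s = 0") (auto simp: Iset_def sgn_scaleR)
qed

lemma Kin_scale: "p \<in> Kin \<Longrightarrow> 0 \<le> s \<Longrightarrow> s \<le> 1 \<Longrightarrow> s *\<^sub>R p \<in> Kin"
proof -
  assume "p \<in> Kin" "0 \<le> s" "s \<le> 1"
  moreover have "s * norm p \<le> norm p" using \<open>0 \<le> s\<close> \<open>s \<le> 1\<close> by (simp add: mult_left_le_one_le)
  ultimately show ?thesis by (cases "s = 0") (auto simp: Kin_def sgn_scaleR)
qed

lemma Kout_scale: "p \<in> Kout \<Longrightarrow> 1 \<le> s \<Longrightarrow> s *\<^sub>R p \<in> Kout"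
proof -
  assume "p \<in> Kout" "1 \<le> s"
  moreover have "norm p \<le> s * norm p" using \<open>1 \<le> s\<close> by (simp add: mult_le_cancel_right1)
  ultimately show ?thesis unfolding Kout_def by (auto simp: sgn_scaleR intro: order_trans)
qed

lemma starlike_Iset: "starlike Iset"
  unfolding starlike_def
proof (intro bexI ballI)
  show "0 \<in> Iset" by (simp add: Iset_def)
  fix x assume "x \<in> Iset"
  then show "closed_segment 0 x \<subseteq> Iset"
    by (auto simp: closed_segment_def intro!: Iset_scale)
qed

lemma connected_Oset:
  assumes "2 \<le> DIM('a)"
  shows "connected Oset"
proof -
  have "Oset = (\<lambda>(\<theta>,s). (r \<theta> + s) *\<^sub>R \<theta>) ` (sphere 0 1 \<times> {0<..})"
  proof (intro set_eqI iffI)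
    fix p assume "p \<in> Oset"
    then have "p \<noteq> 0" "norm p > r (sgn p)" by (auto simp: Oset_def)
    then have "p = (r (sgn p) + (norm p - r (sgn p))) *\<^sub>R sgn p"
      by (simp add: sgn_div_norm)
    then show "p \<in> (\<lambda>(\<theta>,s). (r \<theta> + s) *\<^sub>R \<theta>) ` (sphere 0 1 \<times> {0<..})"
      using \<open>p \<noteq> 0\<close> \<open>norm p > r (sgn p)\<close>
      by (intro image_eqI[where x="(sgn p, norm p - r (sgn p))"]) (auto simp: norm_sgn)
  next
    fix p assume "p \<in> (\<lambda>(\<theta>,s). (r \<theta> + s) *\<^sub>R \<theta>) ` (sphere 0 1 \<times> {0<..})"
    then obtain \<theta> s where th: "\<theta> \<in> sphere 0 1" "s > 0" "p = (r \<theta> + s) *\<^sub>R \<theta>" by auto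
    have rp: "r \<theta> > 0" using r_pos[OF th(1)] .
    then have "sgn p = \<theta>" using th by (simp add: sgn_scaleR sgn_div_norm)
    then show "p \<in> Oset" using th rp by (auto simp: Oset_def)
  qed
  also have "connected \<dots>"
    by (intro connected_continuous_image connected_Times connected_sphere assms)
       (auto intro!: continuous_intros continuous_on_compose2[OF r_cont] simp: split_beta)
  finally show ?thesis .
qed

end

context stardata begin

definition "\<beta> = 1 + 2*L/\<rho>"

lemma beta_ge1: "\<beta> \<ge> 1"
  using L0 rho_pos by (simp add: \<beta>_def)

lemma seg_est:
  assumes x: "x \<in> \<Gamma>" and y: "y \<in> \<Gamma>" and d: "norm (x - y) \<le> \<rho>/2"
    and p: "p \<in> closed_segment x y"
  shows "p \<noteq> 0 \<and> \<bar>norm p - r (sgn p)\<bar> \<le> \<beta> * norm (x - y)"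
proof -
  have px: "norm (p - x) \<le> norm (x - y)"
    using p by (metis dist_commute dist_norm dist_in_closed_segment(1) norm_minus_commute)
  have x0: "x \<noteq> 0" and nx: "norm x = r (sgn x)" using x by (auto simp: Gamma_iff)
  have nxr: "\<rho> \<le> norm x" using Gamma_bounded[OF x] by simp
  have "norm p \<ge> norm x - norm (p - x)"
    by (metis norm_minus_commute norm_triangle_ineq2 diff_le_eq add.commute)
  then have np: "norm p \<ge> \<rho>/2" using px d nxr by linarith
  then have p0: "p \<noteq> 0" using rho_pos by auto
  have "norm (sgn p - sgn x) \<le> 2 * norm (p - x) / norm x" by (rule sgn_diff_bound[OF x0])
  also have "\<dots> \<le> 2 * norm (x - y) / \<rho>"
    using px nxr rho_pos by (intro frac_le) auto
  finally have s: "norm (sgn p - sgn x) \<le> 2 * norm (x - y) / \<rho>" .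
  have "\<bar>r (sgn p) - r (sgn x)\<bar> \<le> L * norm (sgn p - sgn x)"
    by (rule rlip[OF sgn_sphere[OF p0] sgn_sphere[OF x0]])
  also have "\<dots> \<le> L * (2 * norm (x - y) / \<rho>)"
    using s L0 by (rule mult_left_mono)
  finally have r1: "\<bar>r (sgn p) - r (sgn x)\<bar> \<le> 2 * L / \<rho> * norm (x - y)" by (simp add: mult_ac)
  have n1: "\<bar>norm p - norm x\<bar> \<le> norm (x - y)"
    using px by (metis norm_triangle_ineq3 order_trans)
  have "\<bar>norm p - r (sgn p)\<bar> \<le> \<bar>norm p - norm x\<bar> + \<bar>r (sgn p) - r (sgn x)\<bar>"
    using nx by linarith
  also have "\<dots> \<le> norm (x - y) + 2 * L / \<rho> * norm (x - y)" using n1 r1 by linarith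
  also have "\<dots> = \<beta> * norm (x - y)" by (simp add: \<beta>_def algebra_simps)
  finally show ?thesis using p0 by simp
qed

lemma norm_sq_decomp:
  fixes \<theta> \<psi> :: 'a
  assumes "norm \<theta> = 1" "norm \<psi> = 1"
  shows "(norm (a *\<^sub>R \<theta> - u *\<^sub>R \<psi>))\<^sup>2 = (a - u)\<^sup>2 + a * u * (norm (\<theta> - \<psi>))\<^sup>2"
proof -
  have t: "\<theta> \<bullet> \<theta> = 1" "\<psi> \<bullet> \<psi> = 1" using assms by (simp_all add: power2_norm_eq_inner[symmetric])
  show ?thesis
    unfolding power2_norm_eq_inner
    by (simp add: inner_diff_left inner_diff_right t inner_commute power2_eq_square algebra_simps)
qed

lemma transversal:
  assumes x: "x \<in> \<Gamma>" and y: "y \<in> \<Gamma>" and t: "t \<ge> 0"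
  shows "norm (x - t *\<^sub>R y) \<ge> \<rho>/4 * norm (sgn x - sgn y)"
proof -
  define a where "a = norm x"
  define u where "u = t * norm y"
  have x0: "x \<noteq> 0" and y0: "y \<noteq> 0" using x y by (auto simp: Gamma_iff)
  have xe: "x = a *\<^sub>R sgn x" and ye: "t *\<^sub>R y = u *\<^sub>R sgn y"
    using x0 y0 by (auto simp: a_def u_def sgn_div_norm)
  have a: "a \<ge> \<rho>" using Gamma_bounded[OF x] by (simp add: a_def)
  have u: "u \<ge> 0" using t by (simp add: u_def)
  have th: "norm (sgn x - sgn y) \<le> 2"
    using norm_triangle_ineq4[of "sgn x" "sgn y"] x0 y0 by (simp add: norm_sgn)
  define D where "D = norm (sgn x - sgn y)"
  have D0: "0 \<le> D" "D \<le> 2" using th by (auto simp: D_def)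
  have eq: "(norm (x - t *\<^sub>R y))\<^sup>2 = (a - u)\<^sup>2 + a * u * D\<^sup>2"
    unfolding D_def by (subst xe, subst ye, rule norm_sq_decomp) (use x0 y0 in \<open>auto simp: norm_sgn\<close>)
  have "(\<rho>/4 * D)\<^sup>2 \<le> (a - u)\<^sup>2 + a * u * D\<^sup>2"
  proof (cases "u \<ge> a/2")
    case True
    have "(\<rho>/4 * D)\<^sup>2 = \<rho>\<^sup>2/16 * D\<^sup>2" by (simp add: power2_eq_square)
    also have "\<dots> \<le> a * u * D\<^sup>2"
    proof (rule mult_right_mono)
      have "\<rho> * \<rho> \<le> a * a" using a rho_pos by (intro mult_mono) auto
      then have "\<rho>\<^sup>2/16 \<le> a * (a/2)" by (simp add: power2_eq_square) (use zero_le_square[of a] in linarith)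
      also have "\<dots> \<le> a * u" using True a rho_pos by (intro mult_left_mono) auto
      finally show "\<rho>\<^sup>2/16 \<le> a * u" .
    qed simp
    also have "\<dots> \<le> (a - u)\<^sup>2 + a * u * D\<^sup>2" by simp
    finally show ?thesis .
  next
    case False
    have "(\<rho>/4 * D)\<^sup>2 = \<rho>\<^sup>2/16 * D\<^sup>2" by (simp add: power2_eq_square)
    also have "\<dots> \<le> \<rho>\<^sup>2/16 * 4"
      using D0 by (intro mult_left_mono) (auto simp: power2_eq_square intro: mult_mono[of D 2 D 2, simplified])
    also have "\<dots> \<le> (a/2)\<^sup>2"
    proof -
      have "\<rho> * \<rho> \<le> a * a" using a rho_pos by (intro mult_mono) auto
      then show ?thesis by (simp add: power2_eq_square)
    qed
    also have "\<dots> \<le> (a - u)\<^sup>2" using False u a rho_pos by (intro power_mono) auto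
    also have "\<dots> \<le> (a - u)\<^sup>2 + a * u * D\<^sup>2" using a u rho_pos by simp
    finally show ?thesis .
  qed
  then have "(\<rho>/4 * D)\<^sup>2 \<le> (norm (x - t *\<^sub>R y))\<^sup>2" using eq by simp
  then show ?thesis unfolding D_def[symmetric] by (rule power2_le_imp_le) simp
qed

lemma chord_le:
  assumes x: "x \<in> \<Gamma>" and y: "y \<in> \<Gamma>"
  shows "norm (x - y) \<le> (L + 1) * norm (sgn x - sgn y)"
proof -
  have x0: "x \<noteq> 0" and y0: "y \<noteq> 0" and nx: "norm x = r (sgn x)" and ny: "norm y = r (sgn y)"
    using x y by (auto simp: Gamma_iff)
  have "x - y = (norm x - norm y) *\<^sub>R sgn x + norm y *\<^sub>R (sgn x - sgn y)"
    using x0 y0 by (simp add: sgn_div_norm algebra_simps)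
  then have "norm (x - y) \<le> \<bar>norm x - norm y\<bar> * norm (sgn x) + norm y * norm (sgn x - sgn y)"
    by (metis norm_triangle_ineq norm_scaleR abs_norm_cancel)
  also have "\<dots> \<le> L * norm (sgn x - sgn y) + 1 * norm (sgn x - sgn y)"
  proof (intro add_mono mult_right_mono)
    show "\<bar>norm x - norm y\<bar> * norm (sgn x) \<le> L * norm (sgn x - sgn y)"
      using rlip[OF sgn_sphere[OF x0] sgn_sphere[OF y0]] nx ny x0 by (simp add: norm_sgn)
    show "norm y \<le> 1" using Gamma_bounded[OF y] by simp
  qed simp
  finally show ?thesis by (simp add: algebra_simps)
qed

end

lemma exists_orth_unit:
  fixes \<theta> :: "'a::euclidean_space"
  assumes "2 \<le> DIM('a)" "norm \<theta> = 1"
  shows "\<exists>\<omega>. norm \<omega> = 1 \<and> \<theta> \<bullet> \<omega> = 0"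
proof -
  obtain b1 b2 :: 'a where b: "b1 \<in> Basis" "b2 \<in> Basis" "b1 \<noteq> b2"
  proof -
    have "card (Basis::'a set) \<ge> 2" using assms(1) by simp
    then obtain b1 where "b1 \<in> (Basis::'a set)"
      by (metis all_not_in_conv card.empty not_numeral_le_zero)
    moreover have "Basis - {b1} \<noteq> {}"
    proof
      assume "Basis - {b1} = {}"
      then have "Basis \<subseteq> {b1}" by blast
      then have "card (Basis::'a set) \<le> 1" by (metis card.insert card.empty card_mono finite.emptyI finite.insertI insert_absorb2 empty_iff One_nat_def)
      then show False using \<open>card (Basis::'a set) \<ge> 2\<close> by simp
    qed
    then obtain b2 where "b2 \<in> Basis - {b1}" by blast
    ultimately show ?thesis using that by blast
  qed
  define v where "v b = b - (b \<bullet> \<theta>) *\<^sub>R \<theta>" for b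
  have tt: "\<theta> \<bullet> \<theta> = 1" using assms(2) by (simp add: power2_norm_eq_inner[symmetric])
  have orth: "\<theta> \<bullet> v b = 0" for b by (simp add: v_def inner_diff_right tt inner_commute)
  have "v b1 \<noteq> 0 \<or> v b2 \<noteq> 0"
  proof (rule ccontr)
    assume "\<not> ?thesis"
    then have e1: "b1 = (b1 \<bullet> \<theta>) *\<^sub>R \<theta>" and e2: "b2 = (b2 \<bullet> \<theta>) *\<^sub>R \<theta>" by (auto simp: v_def)
    have "b1 \<bullet> b2 = 0" using b by (simp add: inner_Basis)
    also have "b1 \<bullet> b2 = (b1 \<bullet> \<theta>) * (b2 \<bullet> \<theta>)"
      by (subst e1, subst e2) (simp add: tt)
    finally have "b1 \<bullet> \<theta> = 0 \<or> b2 \<bullet> \<theta> = 0" by simp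
    then have "b1 = 0 \<or> b2 = 0" using e1 e2 by (metis scaleR_zero_left)
    then show False using b by auto
  qed
  then obtain w where w: "w \<noteq> 0" "\<theta> \<bullet> w = 0" using orth by blast
  show ?thesis
    by (rule exI[of _ "sgn w"]) (use w in \<open>simp add: norm_sgn sgn_div_norm\<close>)
qed

lemma good_mid:
  fixes \<theta> \<psi> :: "'a::euclidean_space"
  assumes "2 \<le> DIM('a)" "norm \<theta> = 1" "norm \<psi> = 1"
  shows "\<exists>\<omega>. norm \<omega> = 1 \<and> \<theta> \<bullet> \<omega> \<ge> 0 \<and> \<psi> \<bullet> \<omega> \<ge> 0"
proof (cases "\<theta> + \<psi> = 0")
  case True
  then have "\<psi> = - \<theta>" by (simp add: add_eq_0_iff2)
  then show ?thesis using exists_orth_unit[OF assms(1,2)] by auto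
next
  case False
  have tt: "\<theta> \<bullet> \<theta> = 1" "\<psi> \<bullet> \<psi> = 1" using assms by (simp_all add: power2_norm_eq_inner[symmetric])
  have cs: "\<bar>\<theta> \<bullet> \<psi>\<bar> \<le> 1" using Cauchy_Schwarz_ineq2[of \<theta> \<psi>] assms by simp
  have "\<theta> \<bullet> (\<theta> + \<psi>) \<ge> 0" "\<psi> \<bullet> (\<theta> + \<psi>) \<ge> 0"
    using cs by (auto simp: inner_add_right tt inner_commute)
  then show ?thesis using False
    by (intro exI[of _ "sgn (\<theta> + \<psi>)"]) (auto simp: norm_sgn sgn_div_norm inner_scaleR_right)
qed

lemma chord_norm:
  fixes \<theta> \<psi> :: "'a::euclidean_space"
  assumes "norm \<theta> = 1" "norm \<psi> = 1" "\<theta> \<bullet> \<psi> \<ge> 0" "0 \<le> u" "u \<le> 1"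
  shows "norm ((1 - u) *\<^sub>R (3 *\<^sub>R \<theta>) + u *\<^sub>R (3 *\<^sub>R \<psi>)) \<ge> 1"
proof -
  have tt: "\<theta> \<bullet> \<theta> = 1" "\<psi> \<bullet> \<psi> = 1" using assms by (simp_all add: power2_norm_eq_inner[symmetric])
  have "(norm ((1 - u) *\<^sub>R (3 *\<^sub>R \<theta>) + u *\<^sub>R (3 *\<^sub>R \<psi>)))\<^sup>2
        = 9 * ((1-u)\<^sup>2 + u\<^sup>2 + 2*u*(1-u)*(\<theta> \<bullet> \<psi>))"
    unfolding power2_norm_eq_inner
    by (simp add: inner_add_left inner_add_right tt inner_commute power2_eq_square algebra_simps)
  also have "\<dots> \<ge> 9 * ((1-u)\<^sup>2 + u\<^sup>2)"
    using assms by (simp add: mult_nonneg_nonneg)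
  also have "9 * ((1-u)\<^sup>2 + u\<^sup>2) \<ge> 1"
  proof -
    have "(2*u - 1)\<^sup>2 \<ge> 0" by simp
    then show ?thesis by (simp add: power2_eq_square algebra_simps)
  qed
  finally have "1 \<le> (norm ((1 - u) *\<^sub>R (3 *\<^sub>R \<theta>) + u *\<^sub>R (3 *\<^sub>R \<psi>)))\<^sup>2" .
  then show ?thesis by (intro power2_le_imp_le[of 1]) simp_all
qed


locale nearid = stardata r L for r :: "'a::euclidean_space \<Rightarrow> real" and L +
  fixes \<Omega> :: "'a set" and \<psi> :: "'a \<Rightarrow> 'a" and \<delta> :: real and \<psi>' :: "'a \<Rightarrow> 'a \<Rightarrow> 'a"
  assumes \<Omega>open: "open \<Omega>" and \<Omega>conn: "connected \<Omega>" and \<Omega>fr: "frontier \<Omega> = \<Gamma>"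
    and \<delta>pos: "0 < \<delta>" and \<delta>1: "\<delta> \<le> 1"
    and bil: "\<And>x y. x \<in> closure \<Omega> \<Longrightarrow> y \<in> closure \<Omega> \<Longrightarrow>
               dist x y / (1+\<delta>) \<le> dist (\<psi> x) (\<psi> y) \<and> dist (\<psi> x) (\<psi> y) \<le> (1+\<delta>) * dist x y"
    and der: "\<And>z. z \<in> closure \<Omega> \<Longrightarrow> (\<psi> has_derivative \<psi>' z) (at z within closure \<Omega>)"
    and derb: "\<And>z h. z \<in> closure \<Omega> \<Longrightarrow> norm (\<psi>' z h - h) \<le> \<delta> * norm h"
begin

lemma Gamma_ne: "\<Gamma> \<noteq> {}"
proof -
  obtain b :: 'a where "b \<in> Basis" using nonempty_Basis by blast
  then have "b \<in> sphere 0 1" by simp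
  then show ?thesis by (auto simp: \<Gamma>_def)
qed

lemma Omega_Gamma: "\<Omega> \<inter> \<Gamma> = {}"
  using \<Omega>fr \<Omega>open by (auto simp: frontier_def interior_open)

lemma closure_eq: "closure \<Omega> = \<Omega> \<union> \<Gamma>"
  using closure_Un_frontier \<Omega>fr by blast

lemma Kin_eq: "Kin = Iset \<union> \<Gamma>" and Kout_eq: "Kout = Oset \<union> \<Gamma>"
  by (auto simp: Kin_def Iset_def Oset_def Kout_def Gamma_iff)

lemma IO_Gamma: "Iset \<inter> \<Gamma> = {}" "Oset \<inter> \<Gamma> = {}"
  by (auto simp: Iset_def Oset_def Gamma_iff)

lemma Omega_ne: "\<Omega> \<noteq> {}"
  using Gamma_ne \<Omega>fr by auto

lemma struct_cases:
  "(\<Omega> = Iset \<and> closure \<Omega> = Kin) \<or> (\<Omega> = Oset \<and> closure \<Omega> = Kout \<and> 2 \<le> DIM('a))"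
proof -
  have sub: "\<Omega> \<subseteq> Iset \<union> Oset" using partition Omega_Gamma by blast
  have "Iset \<inter> \<Omega> = {} \<or> Oset \<inter> \<Omega> = {}"
    by (rule connectedD[OF \<Omega>conn open_Iset open_Oset]) (use partition sub in auto)
  then show ?thesis
  proof
    assume "Oset \<inter> \<Omega> = {}"
    then have s: "\<Omega> \<subseteq> Iset" using sub by blast
    have "Iset \<subseteq> \<Omega>"
    proof (rule ccontr)
      assume "\<not> Iset \<subseteq> \<Omega>"
      then have "Iset - \<Omega> \<noteq> {}" by blast
      moreover have "Iset \<inter> \<Omega> \<noteq> {}" using s Omega_ne by blast
      ultimately have "Iset \<inter> frontier \<Omega> \<noteq> {}"
        using connected_Int_frontier[OF starlike_imp_connected[OF starlike_Iset]] by blast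
      then show False using \<Omega>fr IO_Gamma by auto
    qed
    then have "\<Omega> = Iset" using s by blast
    then show ?thesis using closure_eq Kin_eq by auto
  next
    assume "Iset \<inter> \<Omega> = {}"
    then have s: "\<Omega> \<subseteq> Oset" using sub by blast
    have d: "2 \<le> DIM('a)"
    proof (rule ccontr)
      assume "\<not> 2 \<le> DIM('a)"
      then have d1: "DIM('a) = 1" using DIM_positive[where 'a='a] by linarith
      then have cv: "convex \<Omega>" using connected_convex_1_gen \<Omega>conn by blast
      obtain \<theta> :: 'a where th: "\<theta> \<in> Basis" using nonempty_Basis by blast
      have t1: "\<theta> \<in> sphere 0 1" "-\<theta> \<in> sphere 0 1" using th by auto
      define a where "a = r \<theta>"
      define b where "b = r (-\<theta>)"
      have ab: "a > 0" "b > 0" using r_pos t1 by (auto simp: a_def b_def)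
      have "a *\<^sub>R \<theta> \<in> \<Gamma>" unfolding \<Gamma>_def a_def by (rule image_eqI[where x="\<theta>"]) (use t1 in auto)
      moreover have "b *\<^sub>R (-\<theta>) \<in> \<Gamma>" unfolding \<Gamma>_def b_def by (rule image_eqI[where x="-\<theta>"]) (use t1 in auto)
      ultimately have "a *\<^sub>R \<theta> \<in> closure \<Omega>" "b *\<^sub>R (-\<theta>) \<in> closure \<Omega>"
        using closure_eq by auto
      then have "(b/(a+b)) *\<^sub>R (a *\<^sub>R \<theta>) + (a/(a+b)) *\<^sub>R (b *\<^sub>R (-\<theta>)) \<in> closure \<Omega>"
      proof -
        have "b/(a+b) + a/(a+b) = 1" using ab by (simp add: add_divide_distrib[symmetric])
        then show ?thesis
          using ab \<open>a *\<^sub>R \<theta> \<in> closure \<Omega>\<close> \<open>b *\<^sub>R (-\<theta>) \<in> closure \<Omega>\<close>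
          by (intro convexD convex_closure cv) auto
      qed
      moreover have "(b/(a+b)) *\<^sub>R (a *\<^sub>R \<theta>) + (a/(a+b)) *\<^sub>R (b *\<^sub>R (-\<theta>)) = 0"
        by (simp add: algebra_simps)
      ultimately have z: "0 \<in> closure \<Omega>" by metis
      have "ball 0 \<rho> \<inter> \<Omega> = {}"
      proof -
        have "ball 0 \<rho> \<subseteq> Iset"
        proof
          fix p assume "p \<in> ball (0::'a) \<rho>"
          then show "p \<in> Iset" using r_lo[of p] by (cases "p = 0") (auto simp: Iset_def)
        qed
        then show ?thesis using \<open>Iset \<inter> \<Omega> = {}\<close> by blast
      qed
      then have "ball 0 \<rho> \<inter> closure \<Omega> = {}"
        using open_Int_closure_eq_empty[of "ball 0 \<rho>" \<Omega>] by simp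
      moreover have "(0::'a) \<in> ball 0 \<rho>" using rho_pos by simp
      ultimately show False using z by blast
    qed
    have "Oset \<subseteq> \<Omega>"
    proof (rule ccontr)
      assume "\<not> Oset \<subseteq> \<Omega>"
      then have "Oset - \<Omega> \<noteq> {}" by blast
      moreover have "Oset \<inter> \<Omega> \<noteq> {}" using s Omega_ne by blast
      ultimately have "Oset \<inter> frontier \<Omega> \<noteq> {}"
        using connected_Int_frontier[OF connected_Oset[OF d]] by blast
      then show False using \<Omega>fr IO_Gamma by auto
    qed
    then have "\<Omega> = Oset" using s by blast
    then show ?thesis using closure_eq Kout_eq d by auto
  qed
qed

definition "e x = \<psi> x - x"

lemma e_seg:
  assumes "closed_segment a b \<subseteq> closure \<Omega>"
  shows "norm (e a - e b) \<le> \<delta> * norm (a - b)"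
proof -
  have "norm (e a - e b) \<le> \<delta> * norm (a - b)"
  proof (rule differentiable_bound[where S="closed_segment a b" and f'="\<lambda>z h. \<psi>' z h - h"])
    show "convex (closed_segment a b)" by simp
    fix z assume z: "z \<in> closed_segment a b"
    then have zc: "z \<in> closure \<Omega>" using assms by blast
    have "(\<psi> has_derivative \<psi>' z) (at z within closed_segment a b)"
      by (rule has_derivative_subset[OF der[OF zc] assms])
    then show "(e has_derivative (\<lambda>h. \<psi>' z h - h)) (at z within closed_segment a b)"
      unfolding e_def[abs_def] by (intro has_derivative_diff has_derivative_ident)
    show "onorm (\<lambda>h. \<psi>' z h - h) \<le> \<delta>"
      by (rule onorm_le) (rule derb[OF zc])
  qed auto
  then show ?thesis .
qed

end

lemma arith_in:
  fixes r' np \<beta> \<rho> d C :: real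
  assumes "\<rho> > 0" "r' \<ge> \<rho>" "\<beta> \<ge> 1" "C = 2*\<beta>/\<rho>" "d \<ge> 0" "C*d \<le> 1" "np \<le> r' + \<beta>*d"
  shows "(1 - C*d) * np \<le> r'"
proof -
  have Cd: "C*d \<ge> 0" using assms by simp
  have "(1 - C*d) * np \<le> (1 - C*d) * (r' + \<beta>*d)" by (rule mult_left_mono) (use assms in auto)
  also have "\<dots> = r' + \<beta>*d - C*d*r' - C*d*(\<beta>*d)" by (simp add: algebra_simps)
  finally have 1: "(1 - C*d) * np \<le> r' + \<beta>*d - C*d*r' - C*d*(\<beta>*d)" .
  have 2: "C*d*r' \<ge> C*d*\<rho>" using Cd assms by (intro mult_left_mono) auto
  have 3: "C*d*\<rho> = 2*(\<beta>*d)" using assms by simp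
  have 4: "C*d*(\<beta>*d) \<ge> 0" using Cd assms by simp
  have 5: "\<beta>*d \<ge> 0" using assms by simp
  show ?thesis using 1 2 3 4 5 by linarith
qed

lemma arith_out:
  fixes r' np \<beta> \<rho> d C :: real
  assumes "\<rho> > 0" "r' \<ge> \<rho>" "\<beta> \<ge> 1" "C = 2*\<beta>/\<rho>" "d \<ge> 0" "\<beta>*d \<le> \<rho>/2" "np \<ge> r' - \<beta>*d"
  shows "(1 + C*d) * np \<ge> r'"
proof -
  have Cd: "C*d \<ge> 0" using assms by simp
  have "(1 + C*d) * np \<ge> (1 + C*d) * (r' - \<beta>*d)" by (rule mult_left_mono) (use assms Cd in auto)
  also have "(1 + C*d) * (r' - \<beta>*d) = r' - \<beta>*d + C*d*(r' - \<beta>*d)" by (simp add: algebra_simps)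
  finally have 1: "(1 + C*d) * np \<ge> r' - \<beta>*d + C*d*(r' - \<beta>*d)" .
  have 2: "C*d*(r' - \<beta>*d) \<ge> C*d*(\<rho>/2)" using Cd assms by (intro mult_left_mono) auto
  have 3: "C*d*(\<rho>/2) = \<beta>*d" using assms by simp
  show ?thesis using 1 2 3 by linarith
qed

lemma seg_point: "z \<in> closed_segment a b \<longleftrightarrow> (\<exists>u. 0 \<le> u \<and> u \<le> 1 \<and> z = (1 - u) *\<^sub>R a + u *\<^sub>R b)"
  by (auto simp: closed_segment_def)

context stardata begin

definition "C = 2*\<beta>/\<rho>"
definition "d1 = \<rho>/(2*\<beta>)"
definition "K = 2*C + 2 + 24/d1"

lemma consts_pos: "C > 0" "d1 > 0" "d1 \<le> \<rho>/2" "C * d1 = 1" "\<beta> * d1 = \<rho>/2" "K > 0"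
  using rho_pos beta_ge1 by (auto simp: C_def d1_def K_def field_simps)

lemma radial_Kin:
  assumes "x \<in> Kin" "0 \<le> lam" "lam \<le> 1"
  shows "closed_segment x (lam *\<^sub>R x) \<subseteq> Kin"
proof
  fix z assume "z \<in> closed_segment x (lam *\<^sub>R x)"
  then obtain u where u: "0 \<le> u" "u \<le> 1" "z = (1 - u) *\<^sub>R x + u *\<^sub>R (lam *\<^sub>R x)" by (auto simp: seg_point)
  then have "z = ((1 - u) + u * lam) *\<^sub>R x" by (simp add: algebra_simps)
  moreover have "0 \<le> (1 - u) + u * lam" using u assms by simp
  moreover have "(1 - u) + u * lam \<le> 1" using u assms mult_left_le[of lam u] by simp
  ultimately show "z \<in> Kin" using Kin_scale[OF assms(1)] by simp
qed

lemma radial_Kout: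
  assumes "x \<in> Kout" "1 \<le> lam"
  shows "closed_segment x (lam *\<^sub>R x) \<subseteq> Kout"
proof
  fix z assume "z \<in> closed_segment x (lam *\<^sub>R x)"
  then obtain u where u: "0 \<le> u" "u \<le> 1" "z = (1 - u) *\<^sub>R x + u *\<^sub>R (lam *\<^sub>R x)" by (auto simp: seg_point)
  then have "z = ((1 - u) + u * lam) *\<^sub>R x" by (simp add: algebra_simps)
  moreover have "1 \<le> (1 - u) + u * lam" using u assms mult_left_mono[of 1 lam u] by simp
  ultimately show "z \<in> Kout" using Kout_scale[OF assms(1)] by simp
qed

lemma Gamma_Kin: "\<Gamma> \<subseteq> Kin" and Gamma_Kout: "\<Gamma> \<subseteq> Kout"
  by (auto simp: Kin_def Kout_def Gamma_iff)

lemma mid_Kin: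
  assumes x: "x \<in> \<Gamma>" and y: "y \<in> \<Gamma>" and d: "norm (x - y) \<le> d1"
  shows "closed_segment ((1 - C * norm (x - y)) *\<^sub>R x) ((1 - C * norm (x - y)) *\<^sub>R y) \<subseteq> Kin"
proof
  define d where "d = norm (x - y)"
  define l where "l = 1 - C * d"
  have Cd: "C * d \<le> 1" using d consts_pos mult_left_mono[of d d1 C] by (simp add: d_def)
  have l01: "0 \<le> l" "l \<le> 1" using Cd consts_pos by (auto simp: l_def d_def)
  fix z assume "z \<in> closed_segment ((1 - C * norm (x - y)) *\<^sub>R x) ((1 - C * norm (x - y)) *\<^sub>R y)"
  then obtain u where u: "0 \<le> u" "u \<le> 1" "z = (1 - u) *\<^sub>R (l *\<^sub>R x) + u *\<^sub>R (l *\<^sub>R y)"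
    by (auto simp: seg_point l_def d_def)
  define p where "p = (1 - u) *\<^sub>R x + u *\<^sub>R y"
  have zp: "z = l *\<^sub>R p" using u by (simp add: p_def algebra_simps)
  have "p \<in> closed_segment x y" using u by (auto simp: seg_point p_def)
  moreover have "norm (x - y) \<le> \<rho>/2" using d consts_pos by linarith
  ultimately have est: "p \<noteq> 0" "\<bar>norm p - r (sgn p)\<bar> \<le> \<beta> * d"
    using seg_est[OF x y] by (auto simp: d_def)
  show "z \<in> Kin"
  proof (cases "l = 0")
    case True then show ?thesis using zp by (simp add: Kin_def)
  next
    case False
    then have lp: "l > 0" using l01 by simp
    have "(1 - C*d) * norm p \<le> r (sgn p)"
      by (rule arith_in[where \<rho>=\<rho> and \<beta>=\<beta>])
         (use rho_pos r_lo[OF est(1)] beta_ge1 Cd est(2) in \<open>auto simp: C_def d_def\<close>)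
    then show ?thesis using zp lp est(1) by (simp add: Kin_def sgn_scaleR l_def)
  qed
qed

lemma mid_Kout:
  assumes x: "x \<in> \<Gamma>" and y: "y \<in> \<Gamma>" and d: "norm (x - y) \<le> d1"
  shows "closed_segment ((1 + C * norm (x - y)) *\<^sub>R x) ((1 + C * norm (x - y)) *\<^sub>R y) \<subseteq> Kout"
proof
  define d where "d = norm (x - y)"
  define l where "l = 1 + C * d"
  have "\<beta> * d \<le> \<beta> * d1" by (rule mult_left_mono) (use d beta_ge1 in \<open>auto simp: d_def\<close>)
  then have bd: "\<beta> * d \<le> \<rho>/2" using consts_pos by linarith
  have l1: "1 \<le> l" using consts_pos by (simp add: l_def d_def)
  fix z assume "z \<in> closed_segment ((1 + C * norm (x - y)) *\<^sub>R x) ((1 + C * norm (x - y)) *\<^sub>R y)"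
  then obtain u where u: "0 \<le> u" "u \<le> 1" "z = (1 - u) *\<^sub>R (l *\<^sub>R x) + u *\<^sub>R (l *\<^sub>R y)"
    by (auto simp: seg_point l_def d_def)
  define p where "p = (1 - u) *\<^sub>R x + u *\<^sub>R y"
  have zp: "z = l *\<^sub>R p" using u by (simp add: p_def algebra_simps)
  have "p \<in> closed_segment x y" using u by (auto simp: seg_point p_def)
  moreover have "norm (x - y) \<le> \<rho>/2" using d consts_pos by linarith
  ultimately have est: "p \<noteq> 0" "\<bar>norm p - r (sgn p)\<bar> \<le> \<beta> * d"
    using seg_est[OF x y] by (auto simp: d_def)
  have "(1 + C*d) * norm p \<ge> r (sgn p)"
    by (rule arith_out[where \<rho>=\<rho> and \<beta>=\<beta>])
       (use rho_pos r_lo[OF est(1)] beta_ge1 bd est(2) in \<open>auto simp: C_def d_def\<close>)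
  then show "z \<in> Kout" using zp l1 est(1) by (simp add: Kout_def sgn_scaleR l_def)
qed

lemma radial3_Kout:
  assumes "p \<in> Kout" "norm p \<le> 3"
  shows "closed_segment p (3 *\<^sub>R sgn p) \<subseteq> Kout"
proof -
  have p0: "p \<noteq> 0" using assms by (simp add: Kout_def)
  have "3 *\<^sub>R sgn p = (3 / norm p) *\<^sub>R p" by (simp add: sgn_div_norm divide_inverse)
  moreover have "1 \<le> 3 / norm p" using assms p0 by simp
  ultimately show ?thesis using radial_Kout[OF assms(1)] by metis
qed

lemma chord_Kout:
  assumes "norm \<theta> = 1" "norm \<psi> = 1" "\<theta> \<bullet> \<psi> \<ge> 0"
  shows "closed_segment (3 *\<^sub>R \<theta>) (3 *\<^sub>R \<psi>) \<subseteq> Kout"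
proof
  fix z assume "z \<in> closed_segment (3 *\<^sub>R \<theta>) (3 *\<^sub>R \<psi>)"
  then obtain u where u: "0 \<le> u" "u \<le> 1" "z = (1 - u) *\<^sub>R (3 *\<^sub>R \<theta>) + u *\<^sub>R (3 *\<^sub>R \<psi>)" by (auto simp: seg_point)
  then have n: "norm z \<ge> 1" using chord_norm[OF assms u(1,2)] by simp
  then have "z \<noteq> 0" by auto
  then show "z \<in> Kout" using n r_hi[of z] by (simp add: Kout_def)
qed

end

context nearid begin

lemma e_three:
  assumes "closed_segment a b \<subseteq> closure \<Omega>" "closed_segment b c \<subseteq> closure \<Omega>" "closed_segment c d \<subseteq> closure \<Omega>"
  shows "norm (e a - e d) \<le> \<delta> * (norm (a - b) + norm (b - c) + norm (c - d))"
proof -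
  have "norm (e a - e d) \<le> norm (e a - e b) + norm (e b - e c) + norm (e c - e d)"
    using norm_triangle_ineq[of "e a - e b" "e b - e d"] norm_triangle_ineq[of "e b - e c" "e c - e d"] by simp
  also have "\<dots> \<le> \<delta> * norm (a - b) + \<delta> * norm (b - c) + \<delta> * norm (c - d)"
    using e_seg assms by (intro add_mono) auto
  finally show ?thesis by (simp add: algebra_simps)
qed

lemma E_in:
  assumes cl: "closure \<Omega> = Kin" and x: "x \<in> \<Gamma>" and y: "y \<in> \<Gamma>"
  shows "norm (e x - e y) \<le> K * \<delta> * norm (x - y)"
proof (cases "norm (x - y) \<le> d1")
  case True
  define d where "d = norm (x - y)"
  define l where "l = 1 - C * d"
  have Cd: "C * d \<le> 1" using True consts_pos mult_left_mono[of d d1 C] by (simp add: d_def)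
  have l01: "0 \<le> l" "l \<le> 1" using Cd consts_pos by (auto simp: l_def d_def)
  have nx: "norm x \<le> 1" "norm y \<le> 1" using Gamma_bounded x y by auto
  have "norm (e x - e y) \<le> \<delta> * (norm (x - l *\<^sub>R x) + norm (l *\<^sub>R x - l *\<^sub>R y) + norm (l *\<^sub>R y - y))"
  proof (rule e_three)
    show "closed_segment x (l *\<^sub>R x) \<subseteq> closure \<Omega>" using radial_Kin[OF _ l01] Gamma_Kin x cl by blast
    show "closed_segment (l *\<^sub>R x) (l *\<^sub>R y) \<subseteq> closure \<Omega>" using mid_Kin[OF x y True] cl by (simp add: l_def d_def)
    show "closed_segment (l *\<^sub>R y) y \<subseteq> closure \<Omega>"
      using radial_Kin[OF _ l01] Gamma_Kin y cl by (metis closed_segment_commute subset_eq)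
  qed
  also have "norm (x - l *\<^sub>R x) = (1 - l) * norm x"
  proof -
    have "x - l *\<^sub>R x = (1 - l) *\<^sub>R x" by (simp add: algebra_simps)
    then show ?thesis using l01 by simp
  qed
  also have "norm (l *\<^sub>R y - y) = (1 - l) * norm y"
  proof -
    have "l *\<^sub>R y - y = - ((1 - l) *\<^sub>R y)" by (simp add: algebra_simps)
    then show ?thesis using l01 by simp
  qed
  also have "norm (l *\<^sub>R x - l *\<^sub>R y) = l * d" using l01 by (simp add: d_def scaleR_diff_right[symmetric])
  also have "(1 - l) * norm x + l * d + (1 - l) * norm y \<le> C*d + d + C*d"
  proof -
    have "(1 - l) * norm x \<le> (1 - l) * 1" using nx l01 by (intro mult_left_mono) auto
    moreover have "(1 - l) * norm y \<le> (1 - l) * 1" using nx l01 by (intro mult_left_mono) auto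
    moreover have "l * d \<le> 1 * d" using l01 by (intro mult_right_mono) (auto simp: d_def)
    ultimately have "(1 - l) * norm x + l * d + (1 - l) * norm y \<le> (1 - l) * 1 + 1 * d + (1 - l) * 1" by linarith
    then show ?thesis by (simp add: l_def)
  qed
  finally have "norm (e x - e y) \<le> \<delta> * ((2*C + 1) * d)"
    using \<delta>pos by (simp add: algebra_simps mult_left_mono)
  also have "\<dots> \<le> \<delta> * (K * d)" using \<delta>pos consts_pos
    by (intro mult_left_mono mult_right_mono) (auto simp: K_def d_def)
  finally show ?thesis by (simp add: d_def mult_ac)
next
  case False
  have 0: "0 \<in> Kin" by (simp add: Kin_def)
  have s1: "closed_segment x 0 \<subseteq> closure \<Omega>" using radial_Kin[of x 0] Gamma_Kin x cl by auto
  have s2: "closed_segment 0 y \<subseteq> closure \<Omega>"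
    using radial_Kin[of y 0] Gamma_Kin y cl by (auto simp: closed_segment_commute)
  have nx: "norm x \<le> 1" "norm y \<le> 1" using Gamma_bounded x y by auto
  have "norm (e x - e y) \<le> \<delta> * (norm (x - 0) + norm ((0::'a) - 0) + norm (0 - y))"
  proof -
    have s0: "closed_segment 0 0 \<subseteq> closure \<Omega>" using cl 0 by simp
    show ?thesis using e_three[OF s1 s0 s2] .
  qed
  also have "\<dots> \<le> \<delta> * 2" using nx \<delta>pos by (intro mult_left_mono) auto
  also have "\<delta> * 2 \<le> \<delta> * (K * norm (x - y))"
  proof (rule mult_left_mono)
    have "24 / d1 * d1 \<le> 24 / d1 * norm (x - y)" using False consts_pos by (intro mult_left_mono) auto
    then have "24 \<le> 24 / d1 * norm (x - y)" using consts_pos by simp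
    moreover have "(2*C + 2) * norm (x - y) \<ge> 0" using consts_pos by simp
    ultimately show "2 \<le> K * norm (x - y)" by (simp add: K_def algebra_simps)
  qed (use \<delta>pos in auto)
  finally show ?thesis by (simp add: mult_ac)
qed

end

context nearid begin

lemma G_out:
  assumes cl: "closure \<Omega> = Kout" and dim: "2 \<le> DIM('a)"
    and p: "p \<in> Kout" "norm p \<le> 3" and p': "p' \<in> Kout" "norm p' \<le> 3"
  shows "norm (e p - e p') \<le> 24 * \<delta>"
proof -
  have p0: "p \<noteq> 0" "p' \<noteq> 0" using p p' by (auto simp: Kout_def)
  define \<theta> where "\<theta> = sgn p"
  define \<theta>' where "\<theta>' = sgn p'"
  have nt: "norm \<theta> = 1" "norm \<theta>' = 1" using p0 by (auto simp: \<theta>_def \<theta>'_def norm_sgn)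
  obtain \<omega> where w: "norm \<omega> = 1" "\<theta> \<bullet> \<omega> \<ge> 0" "\<theta>' \<bullet> \<omega> \<ge> 0" using good_mid[OF dim nt] by blast
  have s1: "closed_segment p (3 *\<^sub>R \<theta>) \<subseteq> closure \<Omega>" using radial3_Kout[OF p] cl by (simp add: \<theta>_def)
  have s2: "closed_segment (3 *\<^sub>R \<theta>) (3 *\<^sub>R \<omega>) \<subseteq> closure \<Omega>" using chord_Kout[OF nt(1) w(1,2)] cl by simp
  have s3: "closed_segment (3 *\<^sub>R \<omega>) (3 *\<^sub>R \<theta>') \<subseteq> closure \<Omega>"
    using chord_Kout[OF w(1) nt(2)] w(3) cl by (simp add: inner_commute)
  have s4: "closed_segment (3 *\<^sub>R \<theta>') p' \<subseteq> closure \<Omega>"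
    using radial3_Kout[OF p'] cl by (simp add: \<theta>'_def closed_segment_commute)
  have b1: "norm (p - 3 *\<^sub>R \<theta>) \<le> 6"
    using norm_triangle_ineq4[of p "3 *\<^sub>R \<theta>"] p nt by simp
  have b2: "norm (3 *\<^sub>R \<theta> - 3 *\<^sub>R \<omega>) \<le> 6"
    using norm_triangle_ineq4[of "3 *\<^sub>R \<theta>" "3 *\<^sub>R \<omega>"] nt w by simp
  have b3: "norm (3 *\<^sub>R \<omega> - 3 *\<^sub>R \<theta>') \<le> 6"
    using norm_triangle_ineq4[of "3 *\<^sub>R \<omega>" "3 *\<^sub>R \<theta>'"] nt w by simp
  have b4: "norm (3 *\<^sub>R \<theta>' - p') \<le> 6"
    using norm_triangle_ineq4[of "3 *\<^sub>R \<theta>'" p'] p' nt by simp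
  have "norm (e p - e (3 *\<^sub>R \<omega>)) \<le> \<delta> * (norm (p - 3 *\<^sub>R \<theta>) + norm (3 *\<^sub>R \<theta> - 3 *\<^sub>R \<omega>) + norm (3 *\<^sub>R \<omega> - 3 *\<^sub>R \<omega>))"
    by (rule e_three[OF s1 s2]) (use s2 in \<open>auto\<close>)
  also have "\<dots> \<le> \<delta> * 12" using b1 b2 \<delta>pos by (intro mult_left_mono) auto
  finally have h1: "norm (e p - e (3 *\<^sub>R \<omega>)) \<le> \<delta> * 12" .
  have "norm (e (3 *\<^sub>R \<omega>) - e p') \<le> \<delta> * (norm (3 *\<^sub>R \<omega> - 3 *\<^sub>R \<theta>') + norm (3 *\<^sub>R \<theta>' - p') + norm (p' - p'))"
    by (rule e_three[OF s3 s4]) (use s4 in \<open>auto\<close>)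
  also have "\<dots> \<le> \<delta> * 12" using b3 b4 \<delta>pos by (intro mult_left_mono) auto
  finally have h2: "norm (e (3 *\<^sub>R \<omega>) - e p') \<le> \<delta> * 12" .
  have "norm (e p - e p') \<le> norm (e p - e (3 *\<^sub>R \<omega>)) + norm (e (3 *\<^sub>R \<omega>) - e p')"
    using norm_triangle_ineq[of "e p - e (3 *\<^sub>R \<omega>)" "e (3 *\<^sub>R \<omega>) - e p'"] by simp
  then show ?thesis using h1 h2 by simp
qed

lemma E_out:
  assumes cl: "closure \<Omega> = Kout" and dim: "2 \<le> DIM('a)" and x: "x \<in> \<Gamma>" and y: "y \<in> \<Gamma>"
  shows "norm (e x - e y) \<le> K * \<delta> * norm (x - y)"
proof (cases "norm (x - y) \<le> d1")
  case True
  define d where "d = norm (x - y)"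
  define l where "l = 1 + C * d"
  have Cd: "C * d \<le> 1" using True consts_pos mult_left_mono[of d d1 C] by (simp add: d_def)
  have l1: "1 \<le> l" "l \<le> 2" using Cd consts_pos by (auto simp: l_def d_def)
  have nx: "norm x \<le> 1" "norm y \<le> 1" using Gamma_bounded x y by auto
  have "norm (e x - e y) \<le> \<delta> * (norm (x - l *\<^sub>R x) + norm (l *\<^sub>R x - l *\<^sub>R y) + norm (l *\<^sub>R y - y))"
  proof (rule e_three)
    show "closed_segment x (l *\<^sub>R x) \<subseteq> closure \<Omega>" using radial_Kout[OF _ l1(1)] Gamma_Kout x cl by blast
    show "closed_segment (l *\<^sub>R x) (l *\<^sub>R y) \<subseteq> closure \<Omega>" using mid_Kout[OF x y True] cl by (simp add: l_def d_def)
    show "closed_segment (l *\<^sub>R y) y \<subseteq> closure \<Omega>"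
      using radial_Kout[OF _ l1(1)] Gamma_Kout y cl by (metis closed_segment_commute subset_eq)
  qed
  also have "norm (x - l *\<^sub>R x) = (l - 1) * norm x"
  proof -
    have "x - l *\<^sub>R x = - ((l - 1) *\<^sub>R x)" by (simp add: algebra_simps)
    then show ?thesis using l1 by simp
  qed
  also have "norm (l *\<^sub>R y - y) = (l - 1) * norm y"
  proof -
    have "l *\<^sub>R y - y = (l - 1) *\<^sub>R y" by (simp add: algebra_simps)
    then show ?thesis using l1 by simp
  qed
  also have "norm (l *\<^sub>R x - l *\<^sub>R y) = l * d" using l1 by (simp add: d_def scaleR_diff_right[symmetric])
  also have "(l - 1) * norm x + l * d + (l - 1) * norm y \<le> C*d + 2*d + C*d"
  proof -
    have "(l - 1) * norm x \<le> (l - 1) * 1" using nx l1 by (intro mult_left_mono) auto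
    moreover have "(l - 1) * norm y \<le> (l - 1) * 1" using nx l1 by (intro mult_left_mono) auto
    moreover have "l * d \<le> 2 * d" using l1 by (intro mult_right_mono) (auto simp: d_def)
    ultimately have "(l - 1) * norm x + l * d + (l - 1) * norm y \<le> (l - 1) * 1 + 2 * d + (l - 1) * 1" by linarith
    then show ?thesis by (simp add: l_def)
  qed
  finally have "norm (e x - e y) \<le> \<delta> * ((2*C + 2) * d)"
    using \<delta>pos by (simp add: algebra_simps mult_left_mono)
  also have "\<dots> \<le> \<delta> * (K * d)" using \<delta>pos consts_pos
    by (intro mult_left_mono mult_right_mono) (auto simp: K_def d_def)
  finally show ?thesis by (simp add: d_def mult_ac)
next
  case False
  have nx: "norm x \<le> 1" "norm y \<le> 1" using Gamma_bounded x y by auto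
  have "norm (e x - e y) \<le> 24 * \<delta>"
    by (rule G_out[OF cl dim]) (use nx x y Gamma_Kout in auto)
  also have "24 * \<delta> \<le> \<delta> * (K * norm (x - y))"
  proof -
    have "24 / d1 * d1 \<le> 24 / d1 * norm (x - y)" using False consts_pos by (intro mult_left_mono) auto
    then have "24 \<le> 24 / d1 * norm (x - y)" using consts_pos by simp
    moreover have "(2*C + 2) * norm (x - y) \<ge> 0" using consts_pos by simp
    ultimately have "24 \<le> K * norm (x - y)" by (simp add: K_def algebra_simps)
    then show ?thesis using \<delta>pos mult_left_mono[of 24 "K * norm (x - y)" \<delta>] by (simp add: mult_ac)
  qed
  finally show ?thesis by (simp add: mult_ac)
qed

lemma E_all:
  assumes x: "x \<in> \<Gamma>" and y: "y \<in> \<Gamma>"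
  shows "norm (e x - e y) \<le> K * \<delta> * norm (x - y)"
  using struct_cases E_in[OF _ x y] E_out[OF _ _ x y] by blast

lemma psi_lip: "x \<in> closure \<Omega> \<Longrightarrow> y \<in> closure \<Omega> \<Longrightarrow> dist (\<psi> x) (\<psi> y) \<le> (1+\<delta>) * dist x y"
  and psi_lo: "x \<in> closure \<Omega> \<Longrightarrow> y \<in> closure \<Omega> \<Longrightarrow> dist x y \<le> (1+\<delta>) * dist (\<psi> x) (\<psi> y)"
proof -
  assume a: "x \<in> closure \<Omega>" "y \<in> closure \<Omega>"
  show "dist (\<psi> x) (\<psi> y) \<le> (1+\<delta>) * dist x y" using bil[OF a] by simp
  have "dist x y / (1+\<delta>) \<le> dist (\<psi> x) (\<psi> y)" using bil[OF a] by simp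
  then show "dist x y \<le> (1+\<delta>) * dist (\<psi> x) (\<psi> y)" using \<delta>pos by (simp add: field_simps)
qed

lemma psi_cont: "continuous_on (closure \<Omega>) \<psi>"
proof -
  have "(1+\<delta>)-lipschitz_on (closure \<Omega>) \<psi>"
    using psi_lip \<delta>pos by (auto simp: lipschitz_on_def)
  then show ?thesis by (rule lipschitz_on_continuous_on)
qed

lemma psi_inj: "inj_on \<psi> (closure \<Omega>)"
proof (rule inj_onI)
  fix x y assume "x \<in> closure \<Omega>" "y \<in> closure \<Omega>" "\<psi> x = \<psi> y"
  then show "x = y" using psi_lo[of x y] by simp
qed

lemma closed_img: "closed (\<psi> ` closure \<Omega>)"
  unfolding closed_sequential_limits
proof (intro allI impI, elim conjE)
  fix X l assume X: "\<forall>n. X n \<in> \<psi> ` closure \<Omega>" and lim: "X \<longlonglongrightarrow> l"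
  have "\<forall>n. \<exists>y. y \<in> closure \<Omega> \<and> X n = \<psi> y" using X by blast
  then obtain z where zz: "\<forall>n. z n \<in> closure \<Omega> \<and> X n = \<psi> (z n)" by metis
  then have z: "\<And>n. z n \<in> closure \<Omega>" "\<And>n. X n = \<psi> (z n)" by auto
  have "Cauchy z"
    unfolding Cauchy_def
  proof (intro allI impI)
    fix \<epsilon> :: real assume "\<epsilon> > 0"
    then have "\<epsilon>/(1+\<delta>) > 0" using \<delta>pos by simp
    then obtain M where M: "\<forall>m\<ge>M. \<forall>n\<ge>M. dist (X m) (X n) < \<epsilon>/(1+\<delta>)"
      using LIMSEQ_imp_Cauchy[OF lim] unfolding Cauchy_def by blast
    show "\<exists>M. \<forall>m\<ge>M. \<forall>n\<ge>M. dist (z m) (z n) < \<epsilon>"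
    proof (intro exI allI impI)
      fix m n assume "m \<ge> M" "n \<ge> M"
      then have "dist (X m) (X n) < \<epsilon>/(1+\<delta>)" using M by blast
      then have "(1+\<delta>) * dist (X m) (X n) < \<epsilon>" using \<delta>pos by (simp add: field_simps)
      moreover have "dist (z m) (z n) \<le> (1+\<delta>) * dist (X m) (X n)" using psi_lo z by simp
      ultimately show "dist (z m) (z n) < \<epsilon>" by linarith
    qed
  qed
  then obtain z0 where z0: "z \<longlonglongrightarrow> z0" using Cauchy_convergent_iff convergent_def by blast
  have z0c: "z0 \<in> closure \<Omega>" using closed_sequentially[OF closed_closure z(1) z0] .
  have "(\<lambda>n. \<psi> (z n)) \<longlonglongrightarrow> \<psi> z0"
    by (rule continuous_on_tendsto_compose[OF psi_cont z0 z0c]) (use z in auto)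
  moreover have "X = (\<lambda>n. \<psi> (z n))" by (rule ext) (simp add: z)
  ultimately have "X \<longlonglongrightarrow> \<psi> z0" by simp
  then have "l = \<psi> z0" using lim LIMSEQ_unique by blast
  then show "l \<in> \<psi> ` closure \<Omega>" using z0c by blast
qed

lemma open_P: "open (\<psi> ` \<Omega>)"
proof (rule invariance_of_domain[OF _ \<Omega>open])
  show "continuous_on \<Omega> \<psi>" by (rule continuous_on_subset[OF psi_cont closure_subset])
  show "inj_on \<psi> \<Omega>" by (rule inj_on_subset[OF psi_inj closure_subset])
qed

lemma closure_P: "closure (\<psi> ` \<Omega>) = \<psi> ` closure \<Omega>"
proof
  show "closure (\<psi> ` \<Omega>) \<subseteq> \<psi> ` closure \<Omega>"
    by (rule closure_minimal) (use closure_subset closed_img in auto)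
  show "\<psi> ` closure \<Omega> \<subseteq> closure (\<psi> ` \<Omega>)"
    by (rule image_closure_subset[OF psi_cont closed_closure closure_subset])
qed

lemma frontier_P: "frontier (\<psi> ` \<Omega>) = \<psi> ` \<Gamma>"
proof -
  have "frontier (\<psi> ` \<Omega>) = \<psi> ` closure \<Omega> - \<psi> ` \<Omega>"
    using closure_P open_P by (simp add: frontier_def interior_open)
  also have "\<dots> = \<psi> ` (closure \<Omega> - \<Omega>)"
    by (rule inj_on_image_set_diff[symmetric, OF psi_inj]) (use closure_subset in auto)
  also have "closure \<Omega> - \<Omega> = \<Gamma>" using \<Omega>fr \<Omega>open by (simp add: frontier_def interior_open)
  finally show ?thesis .
qed

end

context nearid begin

definition "x0 = (SOME x. x \<in> \<Gamma>)"
definition "c0 = (if (0::'a) \<in> \<Omega> then 0 else x0)"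
definition "q = e c0"
definition "g x = e x - e c0"

lemma x0_Gamma: "x0 \<in> \<Gamma>"
  unfolding x0_def using Gamma_ne by (simp add: some_in_eq)

lemma cases2:
  "(0 \<in> \<Omega> \<and> \<Omega> = Iset \<and> closure \<Omega> = Kin) \<or> (0 \<notin> \<Omega> \<and> \<Omega> = Oset \<and> closure \<Omega> = Kout \<and> 2 \<le> DIM('a))"
  using struct_cases by (auto simp: Iset_def Oset_def)

lemma psi_q: "\<psi> x - q = x + g x"
  by (simp add: q_def g_def e_def)

lemma g_bound: "x \<in> \<Gamma> \<Longrightarrow> norm (g x) \<le> 24 * \<delta>"
proof -
  assume x: "x \<in> \<Gamma>"
  show ?thesis
  proof (cases "(0::'a) \<in> \<Omega>")
    case True
    then have cl: "closure \<Omega> = Kin" using cases2 by auto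
    have "closed_segment x 0 \<subseteq> closure \<Omega>" using radial_Kin[of x 0] Gamma_Kin x cl by auto
    then have "norm (g x) \<le> \<delta> * norm (x - 0)" using e_seg[of x 0] True by (simp add: g_def c0_def)
    also have "\<dots> \<le> \<delta> * 1" using Gamma_bounded[OF x] \<delta>pos by (intro mult_left_mono) auto
    finally show ?thesis using \<delta>pos by simp
  next
    case False
    then have cl: "closure \<Omega> = Kout" and dim: "2 \<le> DIM('a)" using cases2 by auto
    have "g x = e x - e x0" using False by (simp add: g_def c0_def)
    moreover have "norm (e x - e x0) \<le> 24 * \<delta>"
      by (rule G_out[OF cl dim]) (use x x0_Gamma Gamma_Kout Gamma_bounded[OF x] Gamma_bounded[OF x0_Gamma] in auto)
    ultimately show ?thesis by simp
  qed
qed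

lemma g_lip: "x \<in> \<Gamma> \<Longrightarrow> y \<in> \<Gamma> \<Longrightarrow> norm (g x - g y) \<le> K * \<delta> * norm (x - y)"
  using E_all by (simp add: g_def)

lemma ray:
  assumes w: "norm \<omega> = 1" and small: "24 * \<delta> < \<rho>"
  shows "\<exists>x\<in>\<Gamma>. \<exists>t\<ge>0. \<psi> x = q + t *\<^sub>R \<omega>"
proof -
  define P where "P = \<psi> ` \<Omega>"
  define R where "R = (\<lambda>t. q + t *\<^sub>R \<omega>) ` {0..}"
  have cR: "connected R" unfolding R_def
    by (intro connected_continuous_image continuous_intros) (auto intro: convex_connected)
  have "\<exists>a\<in>R. a \<in> P \<and> (\<exists>b\<in>R. b \<notin> P)"
  proof (cases "(0::'a) \<in> \<Omega>")
    case True
    then have Om: "\<Omega> = Iset" and cl: "closure \<Omega> = Kin" using cases2 by auto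
    have q0: "q = \<psi> 0" using True by (simp add: q_def c0_def e_def)
    have "q \<in> R" unfolding R_def by (rule image_eqI[where x=0]) auto
    moreover have "q \<in> P" using True q0 by (simp add: P_def)
    moreover have "q + 3 *\<^sub>R \<omega> \<in> R" unfolding R_def by (rule image_eqI[where x=3]) auto
    moreover have "q + 3 *\<^sub>R \<omega> \<notin> P"
    proof
      assume "q + 3 *\<^sub>R \<omega> \<in> P"
      then obtain z where z: "z \<in> \<Omega>" "\<psi> z = q + 3 *\<^sub>R \<omega>" by (auto simp: P_def)
      have nz: "norm z \<le> 1"
      proof (cases "z = 0")
        case False
        then show ?thesis using z Om r_hi[of z] by (auto simp: Iset_def)
      qed simp
      have "dist (\<psi> z) (\<psi> 0) \<le> (1+\<delta>) * dist z 0"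
        using psi_lip z(1) True closure_subset by blast
      also have "\<dots> \<le> 2 * 1" using nz \<delta>1 \<delta>pos by (intro mult_mono) auto
      finally have "dist (\<psi> z) (\<psi> 0) \<le> 2" by simp
      moreover have "dist (\<psi> z) (\<psi> 0) = 3" using z q0 w by (simp add: dist_norm)
      ultimately show False by simp
    qed
    ultimately show ?thesis by blast
  next
    case False
    then have Om: "\<Omega> = Oset" and cl: "closure \<Omega> = Kout" and dim: "2 \<le> DIM('a)" using cases2 by auto
    have qx: "q = \<psi> x0 - x0" using False by (simp add: q_def c0_def e_def)
    have x0c: "x0 \<in> closure \<Omega>" using x0_Gamma closure_eq by blast
    have nx0: "norm x0 \<le> 1" "\<rho> \<le> norm x0" using Gamma_bounded[OF x0_Gamma] by auto
    have "q \<in> R" unfolding R_def by (rule image_eqI[where x=0]) auto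
    moreover have "q \<notin> P"
    proof
      assume "q \<in> P"
      then obtain z where z: "z \<in> \<Omega>" "\<psi> z = q" by (auto simp: P_def)
      have zc: "z \<in> closure \<Omega>" using z closure_subset by blast
      have "dist z x0 \<le> (1+\<delta>) * dist (\<psi> z) (\<psi> x0)" using psi_lo[OF zc x0c] .
      also have "dist (\<psi> z) (\<psi> x0) = norm x0" using z qx by (simp add: dist_norm)
      also have "(1+\<delta>) * norm x0 \<le> 2 * 1" using nx0 \<delta>1 \<delta>pos by (intro mult_mono) auto
      finally have "norm (z - x0) \<le> 2" by (simp add: dist_norm)
      then have nz: "norm z \<le> 3" using norm_triangle_ineq2[of z x0] nx0 by simp
      have zK: "z \<in> Kout" using z Om by (simp add: Kout_def Oset_def)
      have "norm (e z - e x0) \<le> 24 * \<delta>"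
        by (rule G_out[OF cl dim zK nz]) (use x0_Gamma Gamma_Kout nx0 in auto)
      moreover have "e z - e x0 = - z" using z qx by (simp add: e_def)
      ultimately have "norm z \<le> 24 * \<delta>" by simp
      moreover have "\<rho> \<le> norm z" using zK r_lo[of z] by (auto simp: Kout_def)
      ultimately show False using small by simp
    qed
    moreover have "\<exists>a\<in>R. a \<in> P"
    proof -
      define M where "M = norm (\<psi> x0) + 4"
      define U where "U = - cball (0::'a) M"
      have cU: "connected U" unfolding U_def by (rule connected_complement_bounded_convex) (auto simp: dim)
      have frP: "frontier P \<subseteq> cball 0 M"
      proof
        fix y assume "y \<in> frontier P"
        then obtain x where x: "x \<in> \<Gamma>" "y = \<psi> x" using frontier_P by (auto simp: P_def)
        have xc: "x \<in> closure \<Omega>" using x closure_eq by blast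
        have "dist (\<psi> x) (\<psi> x0) \<le> (1+\<delta>) * dist x x0" using psi_lip[OF xc x0c] .
        also have "\<dots> \<le> 2 * 2"
        proof (rule mult_mono)
          show "dist x x0 \<le> 2" using norm_triangle_ineq4[of x x0] Gamma_bounded[OF x(1)] nx0 by (simp add: dist_norm)
        qed (use \<delta>1 \<delta>pos in auto)
        finally have "norm (\<psi> x - \<psi> x0) \<le> 4" by (simp add: dist_norm)
        then have "norm (\<psi> x) \<le> M" using norm_triangle_ineq2[of "\<psi> x" "\<psi> x0"] by (simp add: M_def)
        then show "y \<in> cball 0 M" using x by simp
      qed
      have "U \<inter> P \<noteq> {}"
      proof -
        define T where "T = 2 * M + 2 * norm (\<psi> x0) + 4"
        have x00: "x0 \<noteq> 0" using x0_Gamma by (simp add: Gamma_iff)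
        define z where "z = (T / norm x0) *\<^sub>R x0"
        have T2: "T \<ge> 2" using M_def by (simp add: T_def)
        have nz: "norm z = T" using x00 T2 by (simp add: z_def)
        have sz: "sgn z = sgn x0" using x00 T2 by (simp add: z_def sgn_scaleR)
        have zO: "z \<in> Oset" using nz sz x00 r_hi[of x0] T2 by (auto simp: Oset_def)
        then have zc: "z \<in> closure \<Omega>" using Om closure_subset by blast
        have "norm (z - x0) \<le> (1+\<delta>) * dist (\<psi> z) (\<psi> x0)" using psi_lo[OF zc x0c] by (simp add: dist_norm)
        also have "\<dots> \<le> 2 * dist (\<psi> z) (\<psi> x0)" using \<delta>1 by (intro mult_right_mono) auto
        finally have a: "norm (z - x0) \<le> 2 * norm (\<psi> z - \<psi> x0)" by (simp add: dist_norm)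
        have b: "norm (z - x0) \<ge> T - 1" using norm_triangle_ineq2[of z x0] nz nx0 by simp
        have c: "norm (\<psi> z) \<ge> norm (\<psi> z - \<psi> x0) - norm (\<psi> x0)"
          using norm_triangle_ineq2[of "\<psi> z - \<psi> x0" "- \<psi> x0"] by simp
        have "norm (\<psi> z) > M" using a b c by (simp add: T_def)
        then have "\<psi> z \<in> U \<inter> P" using zO Om by (auto simp: U_def P_def)
        then show ?thesis by blast
      qed
      have UP: "U \<subseteq> P"
      proof (rule ccontr)
        assume "\<not> U \<subseteq> P"
        then have "U - P \<noteq> {}" by blast
        then have "U \<inter> frontier P \<noteq> {}" using connected_Int_frontier[OF cU \<open>U \<inter> P \<noteq> {}\<close>] by blast
        then show False using frP by (auto simp: U_def)
      qed
      define a where "a = q + (norm q + M + 1) *\<^sub>R \<omega>"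
      have M0: "M \<ge> 0" by (simp add: M_def)
      have "a \<in> R" unfolding R_def a_def by (rule image_eqI[where x="norm q + M + 1"]) (use M0 in auto)
      moreover have "norm a > M"
      proof -
        have "norm ((norm q + M + 1) *\<^sub>R \<omega>) = norm q + M + 1" using w M_def by simp
        moreover have "norm a \<ge> norm ((norm q + M + 1) *\<^sub>R \<omega>) - norm q"
          using norm_triangle_ineq2[of "(norm q + M + 1) *\<^sub>R \<omega>" "- q"] by (simp add: a_def add.commute)
        ultimately show ?thesis by simp
      qed
      then have "a \<in> P" using UP by (auto simp: U_def)
      ultimately show ?thesis by blast
    qed
    ultimately show ?thesis by blast
  qed
  then obtain a b where ab: "a \<in> R" "a \<in> P" "b \<in> R" "b \<notin> P" by blast
  have "R \<inter> frontier P \<noteq> {}"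
    by (rule connected_Int_frontier[OF cR]) (use ab in auto)
  then obtain y where "y \<in> R" "y \<in> frontier P" by blast
  then obtain t x where "t \<ge> 0" "y = q + t *\<^sub>R \<omega>" "x \<in> \<Gamma>" "y = \<psi> x"
    using frontier_P by (auto simp: R_def P_def)
  then show ?thesis by metis
qed

end

lemma homeo_props:
  fixes h k :: "'a::real_normed_vector \<Rightarrow> 'a"
  assumes ch: "continuous_on UNIV h" and ck: "continuous_on UNIV k"
    and kh: "\<And>x. k (h x) = x" and hk: "\<And>y. h (k y) = y"
  shows "closure (h ` S) = h ` closure S" and "frontier (h ` S) = h ` frontier S"
    and "open S \<Longrightarrow> open (h ` S)"
proof -
  have img: "h ` T = k -` T" for T
  proof
    show "h ` T \<subseteq> k -` T" using kh by auto
    show "k -` T \<subseteq> h ` T" using hk by (metis image_eqI subsetI vimageE)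
  qed
  have ck': "\<And>x. continuous (at x) k" using ck continuous_on_eq_continuous_at[of UNIV k] by simp
  have cl: "closure (h ` T) = h ` closure T" for T
  proof
    show "closure (h ` T) \<subseteq> h ` closure T"
      unfolding img by (rule closure_minimal) (use ck' closure_subset in \<open>auto intro!: continuous_closed_vimage\<close>)
    show "h ` closure T \<subseteq> closure (h ` T)"
      by (rule image_closure_subset[OF continuous_on_subset[OF ch] closed_closure closure_subset]) simp
  qed
  then show "closure (h ` S) = h ` closure S" .
  have bij: "bij h" using kh hk by (metis bijI' )
  have inj: "inj h" using kh by (metis injI)
  show "frontier (h ` S) = h ` frontier S"
    unfolding frontier_closures
    by (simp add: cl bij_image_Compl_eq[OF bij, symmetric] image_Int[OF inj])
  show "open S \<Longrightarrow> open (h ` S)"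
    unfolding img by (rule continuous_open_vimage) (use ck' in auto)
qed

locale nearid_small = nearid +
  assumes sm1: "24 * \<delta> \<le> \<rho>/2" and sm2: "K * \<delta> \<le> 1"
    and sm3: "K * \<delta> + 4 * (24 * \<delta>) / \<rho> \<le> \<rho> / (8 * (L + 1))"
begin

definition "\<epsilon> = 24 * \<delta>"
definition "F x = \<psi> x - q"

lemma eps: "0 < \<epsilon>" "\<epsilon> \<le> \<rho>/2" "\<epsilon> \<le> 1/2"
  using sm1 \<delta>pos rho_le1 by (auto simp: \<epsilon>_def)

lemma F_eq: "F x = x + g x" by (simp add: F_def psi_q)

lemma F_bounds: "x \<in> \<Gamma> \<Longrightarrow> \<rho>/2 \<le> norm (F x) \<and> norm (F x) \<le> 1 + \<epsilon>"
proof -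
  assume x: "x \<in> \<Gamma>"
  have gx: "norm (g x) \<le> \<epsilon>" using g_bound[OF x] by (simp add: \<epsilon>_def)
  have nx: "\<rho> \<le> norm x" "norm x \<le> 1" using Gamma_bounded[OF x] by auto
  have "norm (x + g x) \<ge> norm x - norm (g x)" using norm_triangle_ineq2[of x "- g x"] by simp
  moreover have "norm (x + g x) \<le> norm x + norm (g x)" by (rule norm_triangle_ineq)
  ultimately show ?thesis using gx nx eps by (simp add: F_eq)
qed

lemma F_lip: "x \<in> \<Gamma> \<Longrightarrow> y \<in> \<Gamma> \<Longrightarrow> norm (F x - F y) \<le> 2 * norm (x - y)"
proof -
  assume x: "x \<in> \<Gamma>" and y: "y \<in> \<Gamma>"
  have "F x - F y = (x - y) + (g x - g y)" by (simp add: F_eq)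
  then have "norm (F x - F y) \<le> norm (x - y) + norm (g x - g y)" by (metis norm_triangle_ineq)
  also have "norm (g x - g y) \<le> K * \<delta> * norm (x - y)" by (rule g_lip[OF x y])
  also have "K * \<delta> * norm (x - y) \<le> 1 * norm (x - y)" using sm2 by (intro mult_right_mono) auto
  finally show ?thesis by simp
qed

lemma F_dir:
  assumes x: "x \<in> \<Gamma>" and y: "y \<in> \<Gamma>"
  shows "norm (sgn (F x) - sgn (F y)) \<ge> \<rho> / (16 * (L + 1)) * norm (x - y)"
proof -
  define u where "u = F x"
  define v where "v = F y"
  define D where "D = norm (x - y)"
  define A where "A = \<rho> / (4 * (L + 1))"
  have D0: "D \<ge> 0" by (simp add: D_def)
  have bu: "\<rho>/2 \<le> norm u" "norm u \<le> 1 + \<epsilon>" using F_bounds[OF x] by (auto simp: u_def)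
  have bv: "\<rho>/2 \<le> norm v" "norm v \<le> 1 + \<epsilon>" using F_bounds[OF y] by (auto simp: v_def)
  have nu0: "norm u > 0" and nv0: "norm v > 0" using bu bv rho_pos by auto
  define \<tau> where "\<tau> = norm u / norm v"
  have tau0: "\<tau> \<ge> 0" by (simp add: \<tau>_def)
  have eq1: "sgn u - sgn v = (1 / norm u) *\<^sub>R (u - \<tau> *\<^sub>R v)"
    using nu0 nv0 by (simp add: sgn_div_norm \<tau>_def algebra_simps divide_inverse)
  have eq2: "u - \<tau> *\<^sub>R v = (x - \<tau> *\<^sub>R y) + (g x - g y) + (1 - \<tau>) *\<^sub>R g y"
    by (simp add: u_def v_def F_eq algebra_simps)
  have t1: "norm (x - \<tau> *\<^sub>R y) \<ge> A * D"
  proof -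
    have "norm (x - y) \<le> (L + 1) * norm (sgn x - sgn y)" by (rule chord_le[OF x y])
    then have "D / (L + 1) \<le> norm (sgn x - sgn y)" using L0 by (simp add: D_def field_simps)
    then have "\<rho>/4 * (D / (L + 1)) \<le> \<rho>/4 * norm (sgn x - sgn y)" using rho_pos by (intro mult_left_mono) auto
    also have "\<dots> \<le> norm (x - \<tau> *\<^sub>R y)" by (rule transversal[OF x y tau0])
    finally show ?thesis by (simp add: A_def field_simps)
  qed
  have t2: "norm (g x - g y) \<le> (K * \<delta>) * D" using g_lip[OF x y] by (simp add: D_def)
  have t3: "\<bar>1 - \<tau>\<bar> \<le> 4 / \<rho> * D"
  proof -
    have "\<bar>1 - \<tau>\<bar> = \<bar>norm v - norm u\<bar> / norm v" using nv0 by (simp add: \<tau>_def field_simps)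
    also have "\<bar>norm v - norm u\<bar> \<le> norm (u - v)" by (metis norm_minus_commute norm_triangle_ineq3)
    then have "\<bar>norm v - norm u\<bar> / norm v \<le> norm (u - v) / norm v" using nv0 by (simp add: divide_right_mono)
    also have "norm (u - v) \<le> 2 * D" using F_lip[OF x y] by (simp add: u_def v_def D_def)
    then have "norm (u - v) / norm v \<le> (2 * D) / (\<rho>/2)"
      using nv0 bv rho_pos D0 by (intro frac_le) auto
    also have "(2 * D) / (\<rho>/2) = 4 / \<rho> * D" by (simp add: field_simps)
    finally show ?thesis .
  qed
  have t4: "norm ((1 - \<tau>) *\<^sub>R g y) \<le> (4 * \<epsilon> / \<rho>) * D"
  proof -
    have "norm ((1 - \<tau>) *\<^sub>R g y) = \<bar>1 - \<tau>\<bar> * norm (g y)" by simp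
    also have "\<dots> \<le> (4 / \<rho> * D) * \<epsilon>"
      using t3 g_bound[OF y] by (intro mult_mono) (auto simp: \<epsilon>_def)
    finally show ?thesis by (simp add: field_simps)
  qed
  have "norm (u - \<tau> *\<^sub>R v) \<ge> norm (x - \<tau> *\<^sub>R y) - norm (g x - g y) - norm ((1 - \<tau>) *\<^sub>R g y)"
  proof -
    have "norm (x - \<tau> *\<^sub>R y) \<le> norm (u - \<tau> *\<^sub>R v) + norm (g x - g y) + norm ((1 - \<tau>) *\<^sub>R g y)"
    proof -
      have "x - \<tau> *\<^sub>R y = (u - \<tau> *\<^sub>R v) - (g x - g y) - (1 - \<tau>) *\<^sub>R g y" using eq2 by (simp add: algebra_simps)
      then show ?thesis
        using norm_triangle_ineq4[of "(u - \<tau> *\<^sub>R v) - (g x - g y)" "(1 - \<tau>) *\<^sub>R g y"]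
              norm_triangle_ineq4[of "u - \<tau> *\<^sub>R v" "g x - g y"] by simp
    qed
    then show ?thesis by simp
  qed
  then have "norm (u - \<tau> *\<^sub>R v) \<ge> A * D - (K * \<delta>) * D - (4 * \<epsilon> / \<rho>) * D" using t1 t2 t4 by linarith
  also have "A * D - (K * \<delta>) * D - (4 * \<epsilon> / \<rho>) * D = (A - K * \<delta> - 4 * \<epsilon> / \<rho>) * D" by (simp add: algebra_simps)
  also have "(A - K * \<delta> - 4 * \<epsilon> / \<rho>) * D \<ge> (A / 2) * D"
  proof (rule mult_right_mono[OF _ D0])
    have h1: "\<rho> / (8 * (L + 1)) = A / 2" by (simp add: A_def)
    have h2: "4 * \<epsilon> / \<rho> = 4 * (24 * \<delta>) / \<rho>" by (simp add: \<epsilon>_def)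
    show "A / 2 \<le> A - K * \<delta> - 4 * \<epsilon> / \<rho>" using sm3 h1 h2 by linarith
  qed
  finally have lb: "norm (u - \<tau> *\<^sub>R v) \<ge> (A / 2) * D" .
  have "norm (sgn u - sgn v) = norm (u - \<tau> *\<^sub>R v) / norm u" using eq1 nu0 by simp
  also have "norm (u - \<tau> *\<^sub>R v) / norm u \<ge> ((A / 2) * D) / 2"
    by (rule frac_le) (use lb nu0 bu eps in auto)
  finally show ?thesis by (simp add: A_def D_def u_def v_def field_simps)
qed

end

context nearid_small begin

definition "Xw \<omega> = (SOME x. x \<in> \<Gamma> \<and> sgn (F x) = \<omega>)"
definition "r2 \<omega> = norm (F (Xw \<omega>)) / (1 + \<epsilon>)"
definition "Lf = 32 * (L + 1)^2"

lemma F_nz: "x \<in> \<Gamma> \<Longrightarrow> F x \<noteq> 0"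
  using F_bounds[of x] rho_pos by auto

lemma X_prop:
  assumes w: "norm \<omega> = 1"
  shows "Xw \<omega> \<in> \<Gamma> \<and> sgn (F (Xw \<omega>)) = \<omega>"
proof -
  have "24 * \<delta> < \<rho>" using sm1 rho_pos by linarith
  then obtain x t where x: "x \<in> \<Gamma>" "t \<ge> 0" "\<psi> x = q + t *\<^sub>R \<omega>" using ray[OF w] by blast
  have Fx: "F x = t *\<^sub>R \<omega>" using x by (simp add: F_def)
  then have "t \<noteq> 0" using F_nz[OF x(1)] by auto
  then have "sgn (F x) = \<omega>" using Fx x(2) w by (simp add: sgn_scaleR sgn_div_norm)
  then have "\<exists>x. x \<in> \<Gamma> \<and> sgn (F x) = \<omega>" using x by blast
  then show ?thesis unfolding Xw_def by (rule someI_ex)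
qed

lemma X_inv: "x \<in> \<Gamma> \<Longrightarrow> Xw (sgn (F x)) = x"
proof -
  assume x: "x \<in> \<Gamma>"
  have "norm (sgn (F x)) = 1" using F_nz[OF x] by (simp add: norm_sgn)
  then have X: "Xw (sgn (F x)) \<in> \<Gamma>" "sgn (F (Xw (sgn (F x)))) = sgn (F x)" using X_prop by auto
  define a where "a = \<rho> / (16 * (L + 1))"
  have "a * norm (Xw (sgn (F x)) - x) \<le> norm (sgn (F (Xw (sgn (F x)))) - sgn (F x))"
    unfolding a_def by (rule F_dir[OF X(1) x])
  then have "a * norm (Xw (sgn (F x)) - x) \<le> 0" using X(2) by simp
  moreover have "a > 0" using rho_pos L0 by (simp add: a_def)
  ultimately have "norm (Xw (sgn (F x)) - x) \<le> 0" by (simp add: mult_le_0_iff)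
  then show ?thesis by simp
qed

lemma r2_at: "x \<in> \<Gamma> \<Longrightarrow> r2 (sgn (F x)) = norm (F x) / (1 + \<epsilon>)"
  by (simp add: r2_def X_inv)

lemma r2_bounds:
  assumes w: "norm \<omega> = 1"
  shows "1 / (1 + Lf) \<le> r2 \<omega> \<and> r2 \<omega> \<le> 1 \<and> r2 \<omega> > 0"
proof -
  have X: "Xw \<omega> \<in> \<Gamma>" using X_prop[OF w] by simp
  have b: "\<rho>/2 \<le> norm (F (Xw \<omega>))" "norm (F (Xw \<omega>)) \<le> 1 + \<epsilon>" using F_bounds[OF X] by auto
  have e: "0 < \<epsilon>" "\<epsilon> \<le> 1/2" using eps by auto
  have "r2 \<omega> \<le> 1" using b e by (simp add: r2_def)
  moreover have "\<rho>/3 \<le> r2 \<omega>"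
  proof -
    have "\<rho>/3 = (\<rho>/2) / (3/2)" by simp
    also have "\<dots> \<le> norm (F (Xw \<omega>)) / (1 + \<epsilon>)"
      using b e rho_pos by (intro frac_le) auto
    finally show ?thesis by (simp add: r2_def)
  qed
  moreover have "1 / (1 + Lf) \<le> \<rho>/3"
  proof -
    have L1: "L + 1 \<ge> 1" using L0 by simp
    have "3 * (L + 1) \<le> 32 * (L + 1) * 1" using L1 by simp
    also have "\<dots> \<le> 32 * (L + 1) * (L + 1)" using L1 by (intro mult_left_mono) auto
    moreover have "32 * (L + 1) * (L + 1) = Lf" by (simp add: Lf_def power2_eq_square)
    ultimately have "3 * (L + 1) \<le> 1 + Lf" by linarith
    then show ?thesis using L0 by (simp add: \<rho>_def field_simps)
  qed
  moreover have "\<rho>/3 > 0" using rho_pos by simp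
  ultimately show ?thesis by linarith
qed

lemma r2_lip:
  assumes w1: "norm \<omega>1 = 1" and w2: "norm \<omega>2 = 1"
  shows "\<bar>r2 \<omega>1 - r2 \<omega>2\<bar> \<le> Lf * norm (\<omega>1 - \<omega>2)"
proof -
  define x1 where "x1 = Xw \<omega>1"
  define x2 where "x2 = Xw \<omega>2"
  have X: "x1 \<in> \<Gamma>" "sgn (F x1) = \<omega>1" "x2 \<in> \<Gamma>" "sgn (F x2) = \<omega>2"
    using X_prop[OF w1] X_prop[OF w2] by (auto simp: x1_def x2_def)
  have e: "0 < \<epsilon>" using eps by auto
  have "\<bar>r2 \<omega>1 - r2 \<omega>2\<bar> = \<bar>norm (F x1) - norm (F x2)\<bar> / (1 + \<epsilon>)"
    using e by (simp add: r2_def x1_def x2_def diff_divide_distrib[symmetric] abs_div)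
  also have "\<dots> \<le> \<bar>norm (F x1) - norm (F x2)\<bar>"
  proof -
    have "\<bar>norm (F x1) - norm (F x2)\<bar> * 1 \<le> \<bar>norm (F x1) - norm (F x2)\<bar> * (1 + \<epsilon>)"
      by (rule mult_left_mono) (use e in auto)
    then show ?thesis using e by (simp add: divide_le_eq)
  qed
  also have "\<dots> \<le> norm (F x1 - F x2)" by (rule norm_triangle_ineq3)
  also have "\<dots> \<le> 2 * norm (x1 - x2)" by (rule F_lip[OF X(1,3)])
  also have "norm (x1 - x2) \<le> (16 * (L + 1) / \<rho>) * norm (\<omega>1 - \<omega>2)"
  proof -
    define a where "a = \<rho> / (16 * (L + 1))"
    have a0: "a > 0" using rho_pos L0 by (simp add: a_def)
    have h: "a * norm (x1 - x2) \<le> norm (\<omega>1 - \<omega>2)" using F_dir[OF X(1,3)] X by (simp add: a_def)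
    have "norm (x1 - x2) = (1/a) * (a * norm (x1 - x2))" using a0 by simp
    also have "\<dots> \<le> (1/a) * norm (\<omega>1 - \<omega>2)" using h a0 by (intro mult_left_mono) auto
    also have "1/a = 16 * (L + 1) / \<rho>" by (simp add: a_def)
    finally show ?thesis .
  qed
  then have "2 * norm (x1 - x2) \<le> 2 * ((16 * (L + 1) / \<rho>) * norm (\<omega>1 - \<omega>2))" by simp
  also have "2 * ((16 * (L + 1) / \<rho>) * norm (\<omega>1 - \<omega>2)) = Lf * norm (\<omega>1 - \<omega>2)"
    using L0 by (simp add: Lf_def \<rho>_def power2_eq_square field_simps)
  finally show ?thesis .
qed

lemma frontier_final:
  "frontier ((\<lambda>w. (1 / (1 + \<epsilon>)) *\<^sub>R (w - q)) ` (\<psi> ` \<Omega>)) = (\<lambda>\<theta>. r2 \<theta> *\<^sub>R \<theta>) ` sphere 0 1"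
proof -
  define c where "c = 1 / (1 + \<epsilon>)"
  have c0: "c > 0" using eps by (simp add: c_def)
  define h where "h w = c *\<^sub>R (w - q)" for w
  define k where "k y = (1/c) *\<^sub>R y + q" for y
  have hp: "frontier (h ` (\<psi> ` \<Omega>)) = h ` frontier (\<psi> ` \<Omega>)"
  proof (rule homeo_props(2)[of h k])
    show "continuous_on UNIV h" unfolding h_def by (intro continuous_intros)
    show "continuous_on UNIV k" unfolding k_def by (intro continuous_intros)
    show "k (h x) = x" for x using c0 by (simp add: h_def k_def)
    show "h (k y) = y" for y using c0 by (simp add: h_def k_def)
  qed
  have "h ` frontier (\<psi> ` \<Omega>) = (\<lambda>\<theta>. r2 \<theta> *\<^sub>R \<theta>) ` sphere 0 1"
  proof
    show "h ` frontier (\<psi> ` \<Omega>) \<subseteq> (\<lambda>\<theta>. r2 \<theta> *\<^sub>R \<theta>) ` sphere 0 1"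
    proof
      fix y assume "y \<in> h ` frontier (\<psi> ` \<Omega>)"
      then obtain x where x: "x \<in> \<Gamma>" "y = h (\<psi> x)" using frontier_P by auto
      have nz: "F x \<noteq> 0" using F_nz[OF x(1)] .
      have y1: "y = (1/(1+\<epsilon>)) *\<^sub>R F x" using x by (simp add: h_def c_def F_def)
      have eq: "(norm (F x)/(1+\<epsilon>)) *\<^sub>R sgn (F x) = (1/(1+\<epsilon>)) *\<^sub>R F x"
        using nz by (simp add: sgn_div_norm scaleR_scaleR)
      have "y = r2 (sgn (F x)) *\<^sub>R sgn (F x)"
        using y1 eq r2_at[OF x(1)] by simp
      moreover have "sgn (F x) \<in> sphere 0 1" using nz by (simp add: norm_sgn)
      ultimately show "y \<in> (\<lambda>\<theta>. r2 \<theta> *\<^sub>R \<theta>) ` sphere 0 1" by blast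
    qed
    show "(\<lambda>\<theta>. r2 \<theta> *\<^sub>R \<theta>) ` sphere 0 1 \<subseteq> h ` frontier (\<psi> ` \<Omega>)"
    proof
      fix y assume "y \<in> (\<lambda>\<theta>. r2 \<theta> *\<^sub>R \<theta>) ` sphere 0 1"
      then obtain \<omega> where w: "norm \<omega> = 1" "y = r2 \<omega> *\<^sub>R \<omega>" by auto
      define x where "x = Xw \<omega>"
      have X: "x \<in> \<Gamma>" "sgn (F x) = \<omega>" using X_prop[OF w(1)] by (auto simp: x_def)
      have nz: "F x \<noteq> 0" using F_nz[OF X(1)] .
      have y1: "y = (norm (F x)/(1+\<epsilon>)) *\<^sub>R sgn (F x)"
        using w(2) X(2) by (simp add: r2_def x_def[symmetric])
      have eq: "(norm (F x)/(1+\<epsilon>)) *\<^sub>R sgn (F x) = (1/(1+\<epsilon>)) *\<^sub>R F x"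
        using nz by (simp add: sgn_div_norm scaleR_scaleR)
      have "y = h (\<psi> x)" using y1 eq by (simp add: h_def c_def F_def)
      then show "y \<in> h ` frontier (\<psi> ` \<Omega>)" using X frontier_P by auto
    qed
  qed
  then show ?thesis using hp by (simp add: h_def c_def)
qed

lemma final_exists:
  "\<exists>q s r3. s > 0 \<and> frontier ((\<lambda>w. (1/s) *\<^sub>R (w - q)) ` (\<psi> ` \<Omega>)) = (\<lambda>\<theta>. r3 \<theta> *\<^sub>R \<theta>) ` sphere 0 1 \<and>
     (\<forall>\<theta>\<in>sphere 0 1. r3 \<theta> > 0 \<and> 1/(1 + 32 * (L + 1)^2) \<le> r3 \<theta> \<and> r3 \<theta> \<le> 1) \<and>
     (\<forall>\<theta>\<in>sphere 0 1. \<forall>\<eta>\<in>sphere 0 1. \<bar>r3 \<theta> - r3 \<eta>\<bar> \<le> 32 * (L + 1)^2 * norm (\<theta> - \<eta>))"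
proof (intro exI conjI)
  show "1 + \<epsilon> > 0" using eps by simp
  show "frontier ((\<lambda>w. (1/(1 + \<epsilon>)) *\<^sub>R (w - q)) ` (\<psi> ` \<Omega>)) = (\<lambda>\<theta>. r2 \<theta> *\<^sub>R \<theta>) ` sphere 0 1"
    by (rule frontier_final)
  show "\<forall>\<theta>\<in>sphere 0 1. r2 \<theta> > 0 \<and> 1/(1 + 32 * (L + 1)^2) \<le> r2 \<theta> \<and> r2 \<theta> \<le> 1"
    using r2_bounds by (auto simp: Lf_def)
  show "\<forall>\<theta>\<in>sphere 0 1. \<forall>\<eta>\<in>sphere 0 1. \<bar>r2 \<theta> - r2 \<eta>\<bar> \<le> 32 * (L + 1)^2 * norm (\<theta> - \<eta>)"
    using r2_lip by (auto simp: Lf_def)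
qed

end

theorem lemma5p5:
  fixes L0 :: real
  shows "\<exists>\<delta>0>0. \<exists>L1. \<forall>(\<Omega>::(real^'n) set) \<delta> \<phi> D.
           lipschitz_graph_domain L0 \<Omega> \<and> 0 < \<delta> \<and> \<delta> < \<delta>0 \<and>
           bi_lipschitz_on (1 + \<delta>) (closure \<Omega>) \<phi> \<and>
           (\<forall>z\<in>closure \<Omega>. (\<phi> has_derivative blinfun_apply (D z)) (at z within closure \<Omega>)) \<and>
           continuous_on (closure \<Omega>) D \<and>
           (\<forall>z\<in>closure \<Omega>. norm (D z - id_blinfun) \<le> \<delta>)
           \<longrightarrow> lipschitz_graph_domain L1 (\<phi> ` \<Omega>)"
proof -
  define Lm where "Lm = max L0 0"
  define rh where "rh = 1/(1+Lm)"
  define bt where "bt = 1 + 2*Lm/rh"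
  define Cc where "Cc = 2*bt/rh"
  define dd where "dd = rh/(2*bt)"
  define Kc where "Kc = 2*Cc + 2 + 24/dd"
  define \<delta>0 where "\<delta>0 = min (min 1 (rh/48)) (min (1/Kc) ((rh/(8*(Lm+1)))/(Kc + 96/rh)))"
  define L1 where "L1 = 32 * (Lm + 1)^2"
  have Lm0: "Lm \<ge> 0" by (simp add: Lm_def)
  have rh0: "rh > 0" using Lm0 by (simp add: rh_def)
  have bt1: "bt \<ge> 1" using Lm0 rh0 by (simp add: bt_def)
  have Cc0: "Cc > 0" and dd0: "dd > 0" using rh0 bt1 by (auto simp: Cc_def dd_def)
  have t24: "24/dd > 0" using dd0 by simp
  have Kc0: "Kc > 0" unfolding Kc_def using t24 Cc0 by linarith
  have "96/rh > 0" using rh0 by simp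
  then have kpos: "Kc + 96/rh > 0" using Kc0 by linarith
  moreover have "rh/(8*(Lm+1)) > 0" using rh0 Lm0 by simp
  ultimately have "(rh/(8*(Lm+1)))/(Kc + 96/rh) > 0" by (rule divide_pos_pos[rotated])
  then have d0: "\<delta>0 > 0" using rh0 Kc0 Lm0 unfolding \<delta>0_def by simp
  show ?thesis
  proof (rule exI[of _ \<delta>0], rule conjI[OF d0], rule exI[of _ L1], intro allI impI)
    fix \<Omega> :: "(real^'n) set" and \<delta> :: real and \<phi> :: "real^'n \<Rightarrow> real^'n" and D
    assume H: "lipschitz_graph_domain L0 \<Omega> \<and> 0 < \<delta> \<and> \<delta> < \<delta>0 \<and>
           bi_lipschitz_on (1 + \<delta>) (closure \<Omega>) \<phi> \<and>
           (\<forall>z\<in>closure \<Omega>. (\<phi> has_derivative blinfun_apply (D z)) (at z within closure \<Omega>)) \<and>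
           continuous_on (closure \<Omega>) D \<and>
           (\<forall>z\<in>closure \<Omega>. norm (D z - id_blinfun) \<le> \<delta>)"
    then have lg: "lipschitz_graph_domain L0 \<Omega>" and dpos: "0 < \<delta>" and dlt: "\<delta> < \<delta>0"
      and bl: "bi_lipschitz_on (1 + \<delta>) (closure \<Omega>) \<phi>"
      and dphi: "\<And>z. z \<in> closure \<Omega> \<Longrightarrow> (\<phi> has_derivative blinfun_apply (D z)) (at z within closure \<Omega>)"
      and dnorm: "\<And>z. z \<in> closure \<Omega> \<Longrightarrow> norm (D z - id_blinfun) \<le> \<delta>"
      by auto
    from lg obtain A r where Oo: "open \<Omega>" and Oc: "connected \<Omega>" and A: "transl_dil_rot A"
      and rpos: "\<forall>\<theta>\<in>sphere 0 1. r \<theta> > 0"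
      and fr: "frontier (A ` \<Omega>) = (\<lambda>\<theta>. r \<theta> *\<^sub>R \<theta>) ` sphere 0 1"
      and rl: "\<forall>\<theta>\<in>sphere 0 1. \<forall>\<psi>\<in>sphere 0 1. \<bar>r \<theta> - r \<psi>\<bar> \<le> L0 * norm (\<theta> - \<psi>)"
      and rb: "\<forall>\<theta>\<in>sphere 0 1. 1 / (1 + L0) \<le> r \<theta> \<and> r \<theta> \<le> 1"
      unfolding lipschitz_graph_domain_def by blast
    from A obtain b c R where c0: "c > 0" and rot: "rotation R" and Aeq: "A = (\<lambda>x. x + b) \<circ> (\<lambda>x. c *\<^sub>R x) \<circ> R"
      unfolding transl_dil_rot_def by blast
    have oR: "orthogonal_transformation R" using rot by (simp add: rotation_def)
    have L0pos: "L0 \<ge> 0"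
    proof -
      obtain e :: "real^'n" where e: "e \<in> Basis" using nonempty_Basis by blast
      have s: "e \<in> sphere 0 1" "-e \<in> sphere 0 1" using e by auto
      have "\<bar>r e - r (-e)\<bar> \<le> L0 * norm (e - -e)" using rl s by blast
      moreover have "e - -e = (2::real) *\<^sub>R e" by (simp add: scaleR_2)
      then have "norm (e - -e) = 2" using e by simp
      ultimately have "\<bar>r e - r (-e)\<bar> \<le> L0 * 2" by simp
      then have "0 \<le> L0 * 2" using abs_ge_zero[of "r e - r (-e)"] by linarith
      then show ?thesis by simp
    qed
    have LmEq: "Lm = L0" using L0pos by (simp add: Lm_def)
    define Ri where "Ri = inv R"
    have lR: "linear R" and lRi: "linear Ri" and nR: "\<And>x. norm (R x) = norm x" and nRi: "\<And>x. norm (Ri x) = norm x"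
      using oR orthogonal_transformation_inv[OF oR]
      by (auto simp: Ri_def orthogonal_transformation_linear orthogonal_transformation_norm)
    have RRi: "\<And>y. R (Ri y) = y" and RiR: "\<And>x. Ri (R x) = x"
      using orthogonal_transformation_bij[OF oR] by (auto simp: Ri_def bij_is_surj surj_f_inv_f bij_is_inj inv_f_f)
    define Af where "Af x = c *\<^sub>R R x + b" for x
    define Ai where "Ai y = Ri ((1/c) *\<^sub>R (y - b))" for y
    have AiAf: "\<And>x. Ai (Af x) = x" using c0 by (simp add: Ai_def Af_def RiR)
    have AfAi: "\<And>y. Af (Ai y) = y" using c0
      by (simp add: Ai_def Af_def RRi)
    have AfA: "A = Af" by (rule ext) (simp add: Aeq Af_def)
    have bR: "bounded_linear R" and bRi: "bounded_linear Ri" using lR lRi by (simp_all add: linear_conv_bounded_linear)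
    have cAf: "continuous_on UNIV Af" unfolding Af_def
      by (intro continuous_intros linear_continuous_on bR)
    have cAi: "continuous_on UNIV Ai" unfolding Ai_def
      by (rule continuous_on_compose2[OF linear_continuous_on[OF bRi]]) (auto intro!: continuous_intros)
    have dAf: "\<And>x y. dist (Af x) (Af y) = c * dist x y"
    proof -
      fix x y
      have "Af x - Af y = c *\<^sub>R R (x - y)" by (simp add: Af_def linear_diff[OF lR] algebra_simps)
      then show "dist (Af x) (Af y) = c * dist x y" using c0 by (simp add: dist_norm nR)
    qed
    define \<Omega>' where "\<Omega>' = Af ` \<Omega>"
    have clO: "closure \<Omega>' = Af ` closure \<Omega>"
      unfolding \<Omega>'_def by (rule homeo_props(1)[OF cAf cAi AiAf AfAi])
    have oO: "open \<Omega>'" unfolding \<Omega>'_def by (rule homeo_props(3)[OF cAf cAi AiAf AfAi Oo])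
    have cO: "connected \<Omega>'" unfolding \<Omega>'_def by (rule connected_continuous_image[OF continuous_on_subset[OF cAf] Oc]) simp
    define \<psi> where "\<psi> y = Af (\<phi> (Ai y))" for y
    define \<psi>' where "\<psi>' z h = c *\<^sub>R R (blinfun_apply (D (Ai z)) ((1/c) *\<^sub>R Ri h))" for z h
    interpret S: stardata r L0
    proof
      show "0 \<le> L0" by (rule L0pos)
      show "\<And>\<theta>. \<theta> \<in> sphere 0 1 \<Longrightarrow> 1 / (1 + L0) \<le> r \<theta> \<and> r \<theta> \<le> 1" using rb by blast
      show "\<And>\<theta> \<psi>. \<theta> \<in> sphere 0 1 \<Longrightarrow> \<psi> \<in> sphere 0 1 \<Longrightarrow> \<bar>r \<theta> - r \<psi>\<bar> \<le> L0 * norm (\<theta> - \<psi>)" using rl by blast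
    qed
    have d1: "\<delta> \<le> 1" using dlt by (simp add: \<delta>0_def)
    interpret N: nearid r L0 \<Omega>' \<psi> \<delta> \<psi>'
    proof
      show "open \<Omega>'" by (rule oO)
      show "connected \<Omega>'" by (rule cO)
      show "frontier \<Omega>' = stardata.\<Gamma> r" using fr AfA by (simp add: S.\<Gamma>_def \<Omega>'_def)
      show "0 < \<delta>" by (rule dpos)
      show "\<delta> \<le> 1" by (rule d1)
      fix x y assume x: "x \<in> closure \<Omega>'" and y: "y \<in> closure \<Omega>'"
      then obtain x' y' where x': "x' \<in> closure \<Omega>" "x = Af x'" and y': "y' \<in> closure \<Omega>" "y = Af y'"
        using clO by auto
      have px: "\<psi> x = Af (\<phi> x')" "\<psi> y = Af (\<phi> y')" using x' y' by (simp_all add: \<psi>_def AiAf)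
      have b1: "dist x' y' / (1 + \<delta>) \<le> dist (\<phi> x') (\<phi> y')" and b2: "dist (\<phi> x') (\<phi> y') \<le> (1 + \<delta>) * dist x' y'"
        using bl x'(1) y'(1) by (auto simp: bi_lipschitz_on_def)
      have "dist x y / (1 + \<delta>) = c * (dist x' y' / (1 + \<delta>))" using x' y' dAf by simp
      also have "\<dots> \<le> c * dist (\<phi> x') (\<phi> y')" using b1 c0 by (intro mult_left_mono) auto
      also have "\<dots> = dist (\<psi> x) (\<psi> y)" using px dAf by simp
      finally have i1: "dist x y / (1 + \<delta>) \<le> dist (\<psi> x) (\<psi> y)" .
      have "dist (\<psi> x) (\<psi> y) = c * dist (\<phi> x') (\<phi> y')" using px dAf by simp
      also have "\<dots> \<le> c * ((1 + \<delta>) * dist x' y')" using b2 c0 by (intro mult_left_mono) auto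
      also have "\<dots> = (1 + \<delta>) * dist x y" using x' y' dAf by simp
      finally show "dist x y / (1 + \<delta>) \<le> dist (\<psi> x) (\<psi> y) \<and> dist (\<psi> x) (\<psi> y) \<le> (1 + \<delta>) * dist x y"
        using i1 by simp
    next
      fix z assume z: "z \<in> closure \<Omega>'"
      then obtain z' where z': "z' \<in> closure \<Omega>" "z = Af z'" using clO by auto
      have Aiz: "Ai z = z'" using z' by (simp add: AiAf)
      have d1: "(Ai has_derivative (\<lambda>h. Ri ((1/c) *\<^sub>R h))) (at z within closure \<Omega>')"
        unfolding Ai_def by (rule bounded_linear.has_derivative[OF bRi]) (auto intro!: derivative_eq_intros)
      have img: "Ai ` closure \<Omega>' = closure \<Omega>" using clO by (simp add: image_image AiAf)
      have d2: "(\<phi> has_derivative blinfun_apply (D (Ai z))) (at (Ai z) within Ai ` closure \<Omega>')"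
        using dphi[OF z'(1)] by (simp add: img Aiz)
      have d3: "((\<lambda>y. \<phi> (Ai y)) has_derivative (\<lambda>h. blinfun_apply (D (Ai z)) (Ri ((1/c) *\<^sub>R h)))) (at z within closure \<Omega>')"
        by (rule has_derivative_in_compose[OF d1 d2])
      have d4: "((\<lambda>y. c *\<^sub>R R (\<phi> (Ai y)) + b) has_derivative (\<lambda>h. c *\<^sub>R R (blinfun_apply (D (Ai z)) (Ri ((1/c) *\<^sub>R h))))) (at z within closure \<Omega>')"
        by (intro has_derivative_add_const has_derivative_scaleR_right bounded_linear.has_derivative[OF bR] d3)
      show "(\<psi> has_derivative \<psi>' z) (at z within closure \<Omega>')"
      proof -
        have e1: "\<psi> = (\<lambda>y. c *\<^sub>R R (\<phi> (Ai y)) + b)" by (rule ext) (simp add: \<psi>_def Af_def)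
        have e2: "\<psi>' z = (\<lambda>h. c *\<^sub>R R (blinfun_apply (D (Ai z)) (Ri ((1/c) *\<^sub>R h))))"
          by (rule ext) (simp add: \<psi>'_def linear_cmul[OF lRi])
        show ?thesis unfolding e1 e2 by (rule d4)
      qed
    next
      fix z h assume z: "z \<in> closure \<Omega>'"
      then obtain z' where z': "z' \<in> closure \<Omega>" "z = Af z'" using clO by auto
      have Aiz: "Ai z = z'" using z' by (simp add: AiAf)
      define k where "k = (1/c) *\<^sub>R Ri h"
      have hk: "h = c *\<^sub>R R k" using c0 by (simp add: k_def linear_cmul[OF lR] RRi)
      have "\<psi>' z h - h = c *\<^sub>R (R (blinfun_apply (D z') k) - R k)"
        by (simp add: \<psi>'_def Aiz k_def[symmetric] hk[symmetric] algebra_simps)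
      also have "\<dots> = c *\<^sub>R R (blinfun_apply (D z') k - k)" by (simp add: linear_diff[OF lR])
      finally have "norm (\<psi>' z h - h) = c * norm (blinfun_apply (D z') k - k)" using c0 by (simp add: nR)
      also have "blinfun_apply (D z') k - k = blinfun_apply (D z' - id_blinfun) k" by (simp add: blinfun.diff_left)
      also have "c * norm (blinfun_apply (D z' - id_blinfun) k) \<le> c * (norm (D z' - id_blinfun) * norm k)"
        using c0 norm_blinfun by (intro mult_left_mono) auto
      also have "\<dots> \<le> c * (\<delta> * norm k)" using c0 dnorm[OF z'(1)] by (intro mult_left_mono mult_right_mono) auto
      also have "\<dots> = \<delta> * norm h" using c0 by (simp add: hk nR)
      finally show "norm (\<psi>' z h - h) \<le> \<delta> * norm h" .
    qed
    have rhEq: "stardata.\<rho> L0 = rh" by (simp add: S.\<rho>_def rh_def LmEq)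
    have KEq: "stardata.K L0 = Kc"
      by (simp add: S.K_def S.C_def S.d1_def S.\<beta>_def rhEq Kc_def Cc_def dd_def bt_def LmEq)
    have dle: "\<delta> \<le> rh/48" "\<delta> \<le> 1/Kc" "\<delta> \<le> (rh/(8*(Lm+1)))/(Kc + 96/rh)"
      using dlt by (auto simp: \<delta>0_def)
    interpret NS: nearid_small r L0 \<Omega>' \<psi> \<delta> \<psi>'
    proof
      show "24 * \<delta> \<le> stardata.\<rho> L0 / 2" using dle(1) by (simp add: rhEq)
      show "stardata.K L0 * \<delta> \<le> 1" using dle(2) Kc0 by (simp add: KEq field_simps)
      have "Kc * \<delta> + 4 * (24 * \<delta>) / rh = \<delta> * (Kc + 96/rh)" by (simp add: algebra_simps)
      also have "\<dots> \<le> (rh/(8*(Lm+1)))/(Kc + 96/rh) * (Kc + 96/rh)"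
        using dle(3) Kc0 rh0 by (intro mult_right_mono) auto
      also have "\<dots> = rh/(8*(Lm+1))" using kpos by simp
      finally show "stardata.K L0 * \<delta> + 4 * (24 * \<delta>) / stardata.\<rho> L0 \<le> stardata.\<rho> L0 / (8 * (L0 + 1))"
        by (simp add: KEq rhEq LmEq)
    qed
    obtain q s r3 where s0: "s > 0"
      and frf: "frontier ((\<lambda>w. (1/s) *\<^sub>R (w - q)) ` (\<psi> ` \<Omega>')) = (\<lambda>\<theta>. r3 \<theta> *\<^sub>R \<theta>) ` sphere 0 1"
      and r3b: "\<forall>\<theta>\<in>sphere 0 1. r3 \<theta> > 0 \<and> 1/(1 + 32 * (L0 + 1)^2) \<le> r3 \<theta> \<and> r3 \<theta> \<le> 1"
      and r3l: "\<forall>\<theta>\<in>sphere 0 1. \<forall>\<eta>\<in>sphere 0 1. \<bar>r3 \<theta> - r3 \<eta>\<bar> \<le> 32 * (L0 + 1)^2 * norm (\<theta> - \<eta>)"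
      using NS.final_exists by blast
    have psiimg: "\<psi> ` \<Omega>' = Af ` (\<phi> ` \<Omega>)"
      by (auto simp: \<Omega>'_def \<psi>_def AiAf image_image)
    have phiimg: "\<phi> ` \<Omega> = Ai ` (\<psi> ` \<Omega>')" by (simp add: psiimg image_image AiAf)
    show "lipschitz_graph_domain L1 (\<phi> ` \<Omega>)"
      unfolding lipschitz_graph_domain_def
    proof (intro conjI exI)
      show "open (\<phi> ` \<Omega>)" unfolding phiimg by (rule homeo_props(3)[OF cAi cAf AfAi AiAf N.open_P])
      have "continuous_on (closure \<Omega>) \<phi>"
      proof (rule lipschitz_on_continuous_on)
        show "(1+\<delta>)-lipschitz_on (closure \<Omega>) \<phi>"
          using bl dpos by (auto simp: lipschitz_on_def bi_lipschitz_on_def)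
      qed
      then show "connected (\<phi> ` \<Omega>)"
        by (rule connected_continuous_image[OF continuous_on_subset Oc]) (rule closure_subset)
      show "transl_dil_rot ((\<lambda>x. x + (1/s) *\<^sub>R (b - q)) \<circ> (\<lambda>x. (c/s) *\<^sub>R x) \<circ> R)"
        unfolding transl_dil_rot_def using c0 s0 rot by (intro exI[of _ "(1/s) *\<^sub>R (b - q)"] exI[of _ "c/s"] exI[of _ R]) auto
      have "((\<lambda>x. x + (1/s) *\<^sub>R (b - q)) \<circ> (\<lambda>x. (c/s) *\<^sub>R x) \<circ> R) ` (\<phi> ` \<Omega>) = (\<lambda>w. (1/s) *\<^sub>R (w - q)) ` (\<psi> ` \<Omega>')"
        unfolding psiimg image_image by (rule image_cong) (auto simp: Af_def algebra_simps)
      then show "frontier (((\<lambda>x. x + (1/s) *\<^sub>R (b - q)) \<circ> (\<lambda>x. (c/s) *\<^sub>R x) \<circ> R) ` (\<phi> ` \<Omega>)) = (\<lambda>\<theta>. r3 \<theta> *\<^sub>R \<theta>) ` sphere 0 1"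
        using frf by simp
      show "\<forall>\<theta>\<in>sphere 0 1. 0 < r3 \<theta>" using r3b by blast
      show "\<forall>\<theta>\<in>sphere 0 1. \<forall>\<psi>\<in>sphere 0 1. \<bar>r3 \<theta> - r3 \<psi>\<bar> \<le> L1 * norm (\<theta> - \<psi>)"
        using r3l by (simp add: L1_def LmEq)
      show "\<forall>\<theta>\<in>sphere 0 1. 1 / (1 + L1) \<le> r3 \<theta> \<and> r3 \<theta> \<le> 1"
        using r3b by (simp add: L1_def LmEq)
    qed
  qed
qed


end
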